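(* Let $\Gamma$ be a finite subset of ${\sf Frm}$ and $A\in{\sf Frm}$. Then the following are equivalent: (i) $\vdash_{\sf WF_{N_2}}\bigwedge\Gamma\rightarrow A$; (ii) $\Gamma\Rightarrow A$ is derivable in ${\sf GWF_{N_2}}$; (iii) $\Gamma\Rightarrow A$ is derivable in ${\sf GWF^s_{N_2}}$.
   Context: Language: countably many atoms $p,q,\dots$, the constant $\bot$, and binary connectives $\wedge,\vee,\rightarrow$ ($\rightarrow$ is strict implication). ${\sf Frm}$ is the set of formulas built from atoms and $\bot$ with $\wedge,\vee,\rightarrow$; $A,B,C,D$ range over ${\sf Frm}$. Let $\supset$ be a new binary symbol (material implication) and ${\sf Frm_1}={\sf Frm}\cup\{A\supset B : A,B\in{\sf Frm}\}$ (no nesting of $\supset$). ${\sf Frm_2}$ is the smallest set containing ${\sf Frm_1}$ and closed under $\wedge$ and $\vee$; $X,Y,Z$ range over ${\sf Frm_2}$. Multi-succedent sequents are $\Gamma\Rightarrow\Delta$ with $\Gamma,\Delta$ finite multisets of ${\sf Frm_2}$-formulas. The calculus ${\sf GWF_{N_2}}$ has initial sequents $(id)$ $p,\Gamma\Rightarrow\Delta,p$ ($p$ an atom) and $(L_\bot)$ $\bot,\Gamma\Rightarrow\Delta$, and rules (premises / conclusion): $(L_\wedge)$ $X,Y,\Gamma\Rightarrow\Delta$ / $X\wedge Y,\Gamma\Rightarrow\Delta$; $(R_\wedge)$ $\Gamma\Rightarrow\Delta,X$ and $\Gamma\Rightarrow\Delta,Y$ / $\Gamma\Rightarrow\Delta,X\wedge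 Y$; $(L_\vee)$ $X,\Gamma\Rightarrow\Delta$ and $Y,\Gamma\Rightarrow\Delta$ / $X\vee Y,\Gamma\Rightarrow\Delta$; $(R_\vee)$ $\Gamma\Rightarrow\Delta,X,Y$ / $\Gamma\Rightarrow\Delta,X\vee Y$; $(L_\supset)$ $\Gamma\Rightarrow\Delta,A$ and $B,\Gamma\Rightarrow\Delta$ / $A\supset B,\Gamma\Rightarrow\Delta$; $(R_\supset)$ $A,\Gamma\Rightarrow\Delta,B$ / $\Gamma\Rightarrow\Delta,A\supset B$; $(LR_\rightarrow)$ $C\supset D,A\Rightarrow B$ / $\Gamma,C\rightarrow D\Rightarrow\Delta,A\rightarrow B$; $(R_\rightarrow)$ $A\Rightarrow B$ / $\Gamma\Rightarrow\Delta,A\rightarrow B$. The single-succedent calculus ${\sf GWF^s_{N_2}}$ (sequents $\Gamma\Rightarrow Z$, $Z\in{\sf Frm_2}$) has initial sequents $(id^s)$ $p,\Gamma\Rightarrow p$ and $(L^s_\bot)$ $\bot,\Gamma\Rightarrow Z$, and rules: $(L^s_\wedge)$ $X,Y,\Gamma\Rightarrow Z$ / $X\wedge Y,\Gamma\Rightarrow Z$; $(R^s_\wedge)$ $\Gamma\Rightarrow X$ and $\Gamma\Rightarrow Y$ / $\Gamma\Rightarrow X\wedge Y$; $(L^s_\vee)$ $X,\Gamma\Rightarrow Z$ and $Y,\Gamma\Rightarrow Z$ / $X\vee Y,\Gamma\Rightarrow Z$; $(R^s_{\vee_l})$ $\Gamma\Rightarrow X$ / $\Gamma\Rightarrow X\vee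 Y$; $(R^s_{\vee_r})$ $\Gamma\Rightarrow Y$ / $\Gamma\Rightarrow X\vee Y$; $(L^s_\supset)$ $A\supset B,\Gamma\Rightarrow A$ and $B,\Gamma\Rightarrow Z$ / $A\supset B,\Gamma\Rightarrow Z$; $(R^s_\supset)$ $A,\Gamma\Rightarrow B$ / $\Gamma\Rightarrow A\supset B$; $(LR^s_\rightarrow)$ $C\supset D,A\Rightarrow B$ / $\Gamma,C\rightarrow D\Rightarrow A\rightarrow B$; $(R^s_\rightarrow)$ $A\Rightarrow B$ / $\Gamma\Rightarrow A\rightarrow B$. In all rules $A,B,C,D\in{\sf Frm}$, $X,Y,Z\in{\sf Frm_2}$, $\Gamma,\Delta$ arbitrary finite multisets of ${\sf Frm_2}$-formulas. The Hilbert system ${\sf WF_{N_2}}$ over ${\sf Frm}$ has axiom schemes $A\rightarrow(A\vee B)$; $B\rightarrow(A\vee B)$; $(A\wedge B)\rightarrow A$; $(A\wedge B)\rightarrow B$; $A\wedge(B\vee C)\rightarrow(A\wedge B)\vee(A\wedge C)$; $A\rightarrow A$; $\bot\rightarrow A$; and rules (from theorems to a theorem): from $A$ and $A\rightarrow B$ infer $B$; from $A$ infer $B\rightarrow A$; from $A\rightarrow B$ and $B\rightarrow C$ infer $A\rightarrow C$; from $A\rightarrow B$ and $A\rightarrow C$ infer $A\rightarrow(B\wedge C)$; from $A\rightarrow C$ and $B\rightarrow C$ infer $(A\vee B)\rightarrow C$; from $A$ and $B$ infer $A\wedge B$; (${\sf N_2}$) from $C\rightarrow A\vee D$ and $C\wedge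 B\rightarrow D$ infer $(A\rightarrow B)\rightarrow(C\rightarrow D)$. $\vdash_{\sf WF_{N_2}}A$ means $A$ is a theorem of this system. $\bigwedge\Gamma$ is the conjunction of the members of $\Gamma$ (the empty conjunction read as $\top:=\bot\rightarrow\bot$). *)

theory Defs
  imports Main "HOL-Library.Multiset"
begin

(* One syntax type for all formulas; MImp is material implication (\<supset>),
   Imp is strict implication (\<rightarrow>). Frm, Frm_1, Frm_2 are carved out by predicates. *)
datatype fm = Atom nat | Bot | Conj fm fm | Disj fm fm | Imp fm fm | MImp fm fm

fun is_frm :: "fm \<Rightarrow> bool" where
  "is_frm (Atom p) = True"
| "is_frm Bot = True"
| "is_frm (Conj A B) = (is_frm A \<and> is_frm B)"
| "is_frm (Disj A B) = (is_frm A \<and> is_frm B)"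
| "is_frm (Imp A B) = (is_frm A \<and> is_frm B)"
| "is_frm (MImp A B) = False"

definition is_frm1 :: "fm \<Rightarrow> bool" where
  "is_frm1 X \<longleftrightarrow> is_frm X \<or> (\<exists>A B. is_frm A \<and> is_frm B \<and> X = MImp A B)"

inductive is_frm2 :: "fm \<Rightarrow> bool" where
  f2_base: "is_frm1 X \<Longrightarrow> is_frm2 X"
| f2_conj: "is_frm2 X \<Longrightarrow> is_frm2 Y \<Longrightarrow> is_frm2 (Conj X Y)"
| f2_disj: "is_frm2 X \<Longrightarrow> is_frm2 Y \<Longrightarrow> is_frm2 (Disj X Y)"

definition ms2 :: "fm multiset \<Rightarrow> bool" where
  "ms2 G \<longleftrightarrow> (\<forall>X\<in>#G. is_frm2 X)"

definition Top :: fm where "Top = Imp Bot Bot"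

fun bigconj :: "fm list \<Rightarrow> fm" where
  "bigconj [] = Top"
| "bigconj [A] = A"
| "bigconj (A # B # Gs) = Conj A (bigconj (B # Gs))"

inductive hthm :: "fm \<Rightarrow> bool" where
  ax_or1: "is_frm A \<Longrightarrow> is_frm B \<Longrightarrow> hthm (Imp A (Disj A B))"
| ax_or2: "is_frm A \<Longrightarrow> is_frm B \<Longrightarrow> hthm (Imp B (Disj A B))"
| ax_and1: "is_frm A \<Longrightarrow> is_frm B \<Longrightarrow> hthm (Imp (Conj A B) A)"
| ax_and2: "is_frm A \<Longrightarrow> is_frm B \<Longrightarrow> hthm (Imp (Conj A B) B)"
| ax_dist: "is_frm A \<Longrightarrow> is_frm B \<Longrightarrow> is_frm C \<Longrightarrow>
    hthm (Imp (Conj A (Disj B C)) (Disj (Conj A B) (Conj A C)))"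
| ax_id: "is_frm A \<Longrightarrow> hthm (Imp A A)"
| ax_bot: "is_frm A \<Longrightarrow> hthm (Imp Bot A)"
| r_mp: "hthm A \<Longrightarrow> hthm (Imp A B) \<Longrightarrow> hthm B"
| r_wk: "hthm A \<Longrightarrow> is_frm B \<Longrightarrow> hthm (Imp B A)"
| r_trans: "hthm (Imp A B) \<Longrightarrow> hthm (Imp B C) \<Longrightarrow> hthm (Imp A C)"
| r_conjI: "hthm (Imp A B) \<Longrightarrow> hthm (Imp A C) \<Longrightarrow> hthm (Imp A (Conj B C))"
| r_disjE: "hthm (Imp A C) \<Longrightarrow> hthm (Imp B C) \<Longrightarrow> hthm (Imp (Disj A B) C)"
| r_adj: "hthm A \<Longrightarrow> hthm B \<Longrightarrow> hthm (Conj A B)"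
| r_N2: "hthm (Imp C (Disj A D)) \<Longrightarrow> hthm (Imp (Conj C B) D) \<Longrightarrow>
    hthm (Imp (Imp A B) (Imp C D))"

inductive gwf :: "fm multiset \<Rightarrow> fm multiset \<Rightarrow> bool" where
  g_id: "ms2 G \<Longrightarrow> ms2 D \<Longrightarrow> gwf (add_mset (Atom p) G) (add_mset (Atom p) D)"
| g_bot: "ms2 G \<Longrightarrow> ms2 D \<Longrightarrow> gwf (add_mset Bot G) D"
| g_Lconj: "gwf (add_mset X (add_mset Y G)) D \<Longrightarrow> gwf (add_mset (Conj X Y) G) D"
| g_Rconj: "gwf G (add_mset X D) \<Longrightarrow> gwf G (add_mset Y D) \<Longrightarrow> gwf G (add_mset (Conj X Y) D)"
| g_Ldisj: "gwf (add_mset X G) D \<Longrightarrow> gwf (add_mset Y G) D \<Longrightarrow> gwf (add_mset (Disj X Y) G) D"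
| g_Rdisj: "gwf G (add_mset X (add_mset Y D)) \<Longrightarrow> gwf G (add_mset (Disj X Y) D)"
| g_Lmimp: "is_frm A \<Longrightarrow> is_frm B \<Longrightarrow> gwf G (add_mset A D) \<Longrightarrow> gwf (add_mset B G) D \<Longrightarrow>
    gwf (add_mset (MImp A B) G) D"
| g_Rmimp: "is_frm A \<Longrightarrow> is_frm B \<Longrightarrow> gwf (add_mset A G) (add_mset B D) \<Longrightarrow>
    gwf G (add_mset (MImp A B) D)"
| g_LRimp: "is_frm A \<Longrightarrow> is_frm B \<Longrightarrow> is_frm C \<Longrightarrow> is_frm E \<Longrightarrow> ms2 G \<Longrightarrow> ms2 D \<Longrightarrow>
    gwf {#MImp C E, A#} {#B#} \<Longrightarrow> gwf (add_mset (Imp C E) G) (add_mset (Imp A B) D)"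
| g_Rimp: "is_frm A \<Longrightarrow> is_frm B \<Longrightarrow> ms2 G \<Longrightarrow> ms2 D \<Longrightarrow>
    gwf {#A#} {#B#} \<Longrightarrow> gwf G (add_mset (Imp A B) D)"

inductive gwfs :: "fm multiset \<Rightarrow> fm \<Rightarrow> bool" where
  s_id: "ms2 G \<Longrightarrow> gwfs (add_mset (Atom p) G) (Atom p)"
| s_bot: "ms2 G \<Longrightarrow> is_frm2 Z \<Longrightarrow> gwfs (add_mset Bot G) Z"
| s_Lconj: "gwfs (add_mset X (add_mset Y G)) Z \<Longrightarrow> gwfs (add_mset (Conj X Y) G) Z"
| s_Rconj: "gwfs G X \<Longrightarrow> gwfs G Y \<Longrightarrow> gwfs G (Conj X Y)"
| s_Ldisj: "gwfs (add_mset X G) Z \<Longrightarrow> gwfs (add_mset Y G) Z \<Longrightarrow> gwfs (add_mset (Disj X Y) G) Z"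
| s_Rdisjl: "gwfs G X \<Longrightarrow> is_frm2 Y \<Longrightarrow> gwfs G (Disj X Y)"
| s_Rdisjr: "gwfs G Y \<Longrightarrow> is_frm2 X \<Longrightarrow> gwfs G (Disj X Y)"
| s_Lmimp: "is_frm A \<Longrightarrow> is_frm B \<Longrightarrow> gwfs (add_mset (MImp A B) G) A \<Longrightarrow> gwfs (add_mset B G) Z \<Longrightarrow>
    gwfs (add_mset (MImp A B) G) Z"
| s_Rmimp: "is_frm A \<Longrightarrow> is_frm B \<Longrightarrow> gwfs (add_mset A G) B \<Longrightarrow> gwfs G (MImp A B)"
| s_LRimp: "is_frm A \<Longrightarrow> is_frm B \<Longrightarrow> is_frm C \<Longrightarrow> is_frm E \<Longrightarrow> ms2 G \<Longrightarrow>
    gwfs {#MImp C E, A#} B \<Longrightarrow> gwfs (add_mset (Imp C E) G) (Imp A B)"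
| s_Rimp: "is_frm A \<Longrightarrow> is_frm B \<Longrightarrow> ms2 G \<Longrightarrow>
    gwfs {#A#} B \<Longrightarrow> gwfs G (Imp A B)"

end

theory Submission
  imports Defs
begin



lemma frm_frm2: "is_frm A \<Longrightarrow> is_frm2 A"
  by (simp add: f2_base is_frm1_def)

lemma frm2_MImp[simp]: "is_frm2 (MImp A B) \<longleftrightarrow> is_frm A \<and> is_frm B"
proof
  assume "is_frm2 (MImp A B)" then show "is_frm A \<and> is_frm B"
    by (cases rule: is_frm2.cases) (auto simp: is_frm1_def)
qed (auto simp: is_frm1_def intro: f2_base)

lemma frm2_Imp[simp]: "is_frm2 (Imp A B) \<longleftrightarrow> is_frm A \<and> is_frm B"
proof
  assume "is_frm2 (Imp A B)" then show "is_frm A \<and> is_frm B"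
    by (cases rule: is_frm2.cases) (auto simp: is_frm1_def)
qed (auto simp: is_frm1_def intro: f2_base)

lemma frm2_Conj[simp]: "is_frm2 (Conj X Y) \<longleftrightarrow> is_frm2 X \<and> is_frm2 Y"
proof
  assume "is_frm2 (Conj X Y)" then show "is_frm2 X \<and> is_frm2 Y"
    by (cases rule: is_frm2.cases) (auto simp: is_frm1_def frm_frm2)
qed (auto intro: f2_conj)

lemma frm2_Disj[simp]: "is_frm2 (Disj X Y) \<longleftrightarrow> is_frm2 X \<and> is_frm2 Y"
proof
  assume "is_frm2 (Disj X Y)" then show "is_frm2 X \<and> is_frm2 Y"
    by (cases rule: is_frm2.cases) (auto simp: is_frm1_def frm_frm2)
qed (auto intro: f2_disj)

lemma frm2_Atom[simp]: "is_frm2 (Atom p)" and frm2_Bot[simp]: "is_frm2 Bot"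
  by (auto intro: frm_frm2)

lemma ms2_empty[simp]: "ms2 {#}" and ms2_add[simp]: "ms2 (add_mset X G) \<longleftrightarrow> is_frm2 X \<and> ms2 G"
  and ms2_union[simp]: "ms2 (G + H) \<longleftrightarrow> ms2 G \<and> ms2 H"
  by (auto simp: ms2_def)

lemma gwfs_wf: "gwfs G Z \<Longrightarrow> ms2 G \<and> is_frm2 Z"
  by (induction rule: gwfs.induct) (auto intro: frm_frm2)

lemma gwfs_weak: "gwfs G Z \<Longrightarrow> is_frm2 W \<Longrightarrow> gwfs (add_mset W G) Z"
proof (induction rule: gwfs.induct)
  case (s_id G p)
  have "gwfs (add_mset (Atom p) (add_mset W G)) (Atom p)" using s_id by (intro gwfs.s_id) simp
  then show ?case by (simp add: add_mset_commute)
next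
  case (s_bot G Z)
  have "gwfs (add_mset Bot (add_mset W G)) Z" using s_bot by (intro gwfs.s_bot) simp_all
  then show ?case by (simp add: add_mset_commute)
next
  case (s_Lconj X Y G Z)
  have "gwfs (add_mset (Conj X Y) (add_mset W G)) Z"
    by (rule gwfs.s_Lconj) (use s_Lconj in \<open>simp add: add_mset_commute\<close>)
  then show ?case by (simp add: add_mset_commute)
next
  case (s_Rconj G X Y) then show ?case by (simp add: gwfs.s_Rconj)
next
  case (s_Ldisj X G Z Y)
  have "gwfs (add_mset (Disj X Y) (add_mset W G)) Z"
    by (rule gwfs.s_Ldisj) (use s_Ldisj in \<open>simp_all add: add_mset_commute\<close>)
  then show ?case by (simp add: add_mset_commute)
next
  case (s_Rdisjl G X Y) then show ?case by (simp add: gwfs.s_Rdisjl)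
next
  case (s_Rdisjr G Y X) then show ?case by (simp add: gwfs.s_Rdisjr)
next
  case (s_Lmimp A B G Z)
  have "gwfs (add_mset (MImp A B) (add_mset W G)) Z"
    by (rule gwfs.s_Lmimp) (use s_Lmimp in \<open>simp_all add: add_mset_commute\<close>)
  then show ?case by (simp add: add_mset_commute)
next
  case (s_Rmimp A B G)
  show ?case
    by (rule gwfs.s_Rmimp) (use s_Rmimp in \<open>simp_all add: add_mset_commute\<close>)
next
  case (s_LRimp A B C E G)
  have "gwfs (add_mset (Imp C E) (add_mset W G)) (Imp A B)"
    by (rule gwfs.s_LRimp) (use s_LRimp in \<open>simp_all add: add_mset_commute\<close>)
  then show ?case by (simp add: add_mset_commute)
next
  case (s_Rimp A B G) then show ?case by (simp add: gwfs.s_Rimp)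
qed

lemma gwfs_weakm: "gwfs G Z \<Longrightarrow> ms2 H \<Longrightarrow> gwfs (H + G) Z"
  by (induction H) (auto intro: gwfs_weak)




lemma add_mset_split:
  assumes "add_mset a M = add_mset b N"
  obtains "a = b" "M = N" | K where "M = add_mset b K" "N = add_mset a K"
  using assms by (auto simp: add_eq_conv_ex)

lemma s_id': "Atom p \<in># G \<Longrightarrow> ms2 G \<Longrightarrow> gwfs G (Atom p)"
proof -
  assume a: "Atom p \<in># G" "ms2 G"
  then obtain K where K: "G = add_mset (Atom p) K" by (blast dest: multi_member_split)
  show ?thesis unfolding K using a K by (intro gwfs.s_id) simp
qed
lemma s_bot': "Bot \<in># G \<Longrightarrow> ms2 G \<Longrightarrow> is_frm2 Z \<Longrightarrow> gwfs G Z"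
proof -
  assume a: "Bot \<in># G" "ms2 G" "is_frm2 Z"
  then obtain K where K: "G = add_mset Bot K" by (blast dest: multi_member_split)
  show ?thesis unfolding K using a K by (intro gwfs.s_bot) simp_all
qed
lemma s_LRimp': "Imp C E \<in># G \<Longrightarrow> ms2 G \<Longrightarrow> is_frm A \<Longrightarrow> is_frm B \<Longrightarrow>
   gwfs {#MImp C E, A#} B \<Longrightarrow> gwfs G (Imp A B)"
proof -
  assume a: "Imp C E \<in># G" "ms2 G" "is_frm A" "is_frm B" "gwfs {#MImp C E, A#} B"
  then obtain K where K: "G = add_mset (Imp C E) K" by (blast dest: multi_member_split)
  show ?thesis unfolding K using a K by (intro gwfs.s_LRimp) simp_all
qed

lemma mem_of_eq: "add_mset a M = add_mset b N \<Longrightarrow> a \<noteq> b \<Longrightarrow> a \<in># N"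
  by (metis add_mset_remove_trivial_If insert_noteq_member)
lemma ms2_of_eq: "add_mset a M = N \<Longrightarrow> is_frm2 a \<Longrightarrow> ms2 M \<Longrightarrow> ms2 N"
  by auto

lemma gwfs_invLconj: "gwfs D Z \<Longrightarrow> D = add_mset (Conj P Q) G \<Longrightarrow> gwfs (add_mset P (add_mset Q G)) Z"
proof (induction arbitrary: G rule: gwfs.induct)
  case (s_id G0 p)
  have "ms2 (add_mset (Conj P Q) G)" by (rule ms2_of_eq[OF s_id.prems]) (use s_id in simp_all)
  moreover have "Atom p \<in># G" using mem_of_eq[OF s_id.prems] by simp
  ultimately show ?case by (intro s_id') simp_all
next
  case (s_bot G0 Z)
  have "ms2 (add_mset (Conj P Q) G)" by (rule ms2_of_eq[OF s_bot.prems]) (use s_bot in simp_all)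
  moreover have "Bot \<in># G" using mem_of_eq[OF s_bot.prems] by simp
  ultimately show ?case using s_bot by (intro s_bot') simp_all
next
  case (s_Lconj X Y G0 Z)
  from s_Lconj.prems show ?case
  proof (cases rule: add_mset_split)
    case 1 then show ?thesis using s_Lconj.hyps by simp
  next
    case (2 K)
    have "gwfs (add_mset P (add_mset Q (add_mset X (add_mset Y K)))) Z"
      using s_Lconj.IH[of "add_mset X (add_mset Y K)"] 2 by (simp add: add_mset_commute)
    then have "gwfs (add_mset (Conj X Y) (add_mset P (add_mset Q K))) Z"
      by (intro gwfs.s_Lconj) (simp add: add_mset_commute)
    then show ?thesis using 2 by (simp add: add_mset_commute)
  qed
next
  case (s_Rconj G0 X Y) then show ?case by (simp add: gwfs.s_Rconj)
next
  case (s_Ldisj X G0 Z Y)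
  from s_Ldisj.prems show ?case
  proof (cases rule: add_mset_split)
    case 1 then show ?thesis by simp
  next
    case (2 K)
    have "gwfs (add_mset P (add_mset Q (add_mset X K))) Z"
      using s_Ldisj.IH(1)[of "add_mset X K"] 2 by (simp add: add_mset_commute)
    moreover have "gwfs (add_mset P (add_mset Q (add_mset Y K))) Z"
      using s_Ldisj.IH(2)[of "add_mset Y K"] 2 by (simp add: add_mset_commute)
    ultimately have "gwfs (add_mset (Disj X Y) (add_mset P (add_mset Q K))) Z"
      by (intro gwfs.s_Ldisj) (simp_all add: add_mset_commute)
    then show ?thesis using 2 by (simp add: add_mset_commute)
  qed
next
  case (s_Rdisjl G0 X Y) then show ?case by (simp add: gwfs.s_Rdisjl)
next
  case (s_Rdisjr G0 Y X) then show ?case by (simp add: gwfs.s_Rdisjr)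
next
  case (s_Lmimp A B G0 Z)
  from s_Lmimp.prems show ?case
  proof (cases rule: add_mset_split)
    case 1 then show ?thesis by simp
  next
    case (2 K)
    have "gwfs (add_mset P (add_mset Q (add_mset (MImp A B) K))) A"
      using s_Lmimp.IH(1)[of "add_mset (MImp A B) K"] 2 by (simp add: add_mset_commute)
    moreover have "gwfs (add_mset P (add_mset Q (add_mset B K))) Z"
      using s_Lmimp.IH(2)[of "add_mset B K"] 2 by (simp add: add_mset_commute)
    ultimately have "gwfs (add_mset (MImp A B) (add_mset P (add_mset Q K))) Z"
      using s_Lmimp.hyps by - (rule gwfs.s_Lmimp, simp_all add: add_mset_commute)
    then show ?thesis using 2 by (simp add: add_mset_commute)
  qed
next
  case (s_Rmimp A B G0)
  have "gwfs (add_mset P (add_mset Q (add_mset A G))) B"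
    using s_Rmimp.IH[of "add_mset A G"] s_Rmimp.prems by (simp add: add_mset_commute)
  then show ?case using s_Rmimp.hyps by (intro gwfs.s_Rmimp) (simp_all add: add_mset_commute)
next
  case (s_LRimp A B C E G0)
  have "ms2 (add_mset (Conj P Q) G)" by (rule ms2_of_eq[OF s_LRimp.prems]) (use s_LRimp in simp_all)
  moreover have "Imp C E \<in># G" using mem_of_eq[OF s_LRimp.prems] by simp
  ultimately show ?case using s_LRimp by (intro s_LRimp') simp_all
next
  case (s_Rimp A B G0)
  then show ?case by (intro gwfs.s_Rimp) auto
qed




lemma gwfs_invLdisj1: "gwfs D Z \<Longrightarrow> D = add_mset (Disj P Q) G \<Longrightarrow> gwfs (add_mset P G) Z"
proof (induction arbitrary: G rule: gwfs.induct)
  case (s_id G0 p)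
  have "ms2 (add_mset (Disj P Q) G)" by (rule ms2_of_eq[OF s_id.prems]) (use s_id in simp_all)
  moreover have "Atom p \<in># G" using mem_of_eq[OF s_id.prems] by simp
  ultimately show ?case by (intro s_id') (simp_all add: frm_frm2)
next
  case (s_bot G0 Z)
  have "ms2 (add_mset (Disj P Q) G)" by (rule ms2_of_eq[OF s_bot.prems]) (use s_bot in simp_all)
  moreover have "Bot \<in># G" using mem_of_eq[OF s_bot.prems] by simp
  ultimately show ?case using s_bot by (intro s_bot') (simp_all add: frm_frm2)
next
  case (s_Lconj X Y G0 Z)
  from s_Lconj.prems show ?case
  proof (cases rule: add_mset_split)
    case 1 then show ?thesis using s_Lconj by simp
  next
    case (2 K)
    have "gwfs (add_mset P (add_mset X (add_mset Y K))) Z"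
      using s_Lconj.IH[of "add_mset X (add_mset Y K)"] 2 by (simp add: add_mset_commute)
    then have "gwfs (add_mset (Conj X Y) (add_mset P K)) Z"
      by (intro gwfs.s_Lconj) (simp add: add_mset_commute)
    then show ?thesis using 2 by (simp add: add_mset_commute)
  qed
next
  case (s_Rconj G0 X Y) then show ?case by (simp add: gwfs.s_Rconj)
next
  case (s_Ldisj X G0 Z Y)
  from s_Ldisj.prems show ?case
  proof (cases rule: add_mset_split)
    case 1 then show ?thesis using s_Ldisj by simp
  next
    case (2 K)
    have "gwfs (add_mset P (add_mset X K)) Z"
      using s_Ldisj.IH(1)[of "add_mset X K"] 2 by (simp add: add_mset_commute)
    moreover have "gwfs (add_mset P (add_mset Y K)) Z"
      using s_Ldisj.IH(2)[of "add_mset Y K"] 2 by (simp add: add_mset_commute)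
    ultimately have "gwfs (add_mset (Disj X Y) (add_mset P K)) Z"
      by (intro gwfs.s_Ldisj) (simp_all add: add_mset_commute)
    then show ?thesis using 2 by (simp add: add_mset_commute)
  qed
next
  case (s_Rdisjl G0 X Y) then show ?case by (simp add: gwfs.s_Rdisjl)
next
  case (s_Rdisjr G0 Y X) then show ?case by (simp add: gwfs.s_Rdisjr)
next
  case (s_Lmimp A B G0 Z)
  from s_Lmimp.prems show ?case
  proof (cases rule: add_mset_split)
    case 1 then show ?thesis using s_Lmimp by simp
  next
    case (2 K)
    have "gwfs (add_mset P (add_mset (MImp A B) K)) A"
      using s_Lmimp.IH(1)[of "add_mset (MImp A B) K"] 2 by (simp add: add_mset_commute)
    moreover have "gwfs (add_mset P (add_mset B K)) Z"
      using s_Lmimp.IH(2)[of "add_mset B K"] 2 by (simp add: add_mset_commute)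
    ultimately have "gwfs (add_mset (MImp A B) (add_mset P K)) Z"
      using s_Lmimp.hyps by - (rule gwfs.s_Lmimp, simp_all add: add_mset_commute)
    then show ?thesis using 2 by (simp add: add_mset_commute)
  qed
next
  case (s_Rmimp A B G0)
  have "gwfs (add_mset P (add_mset A G)) B"
    using s_Rmimp.IH[of "add_mset A G"] s_Rmimp.prems by (simp add: add_mset_commute)
  then show ?case using s_Rmimp.hyps by (intro gwfs.s_Rmimp) (simp_all add: add_mset_commute)
next
  case (s_LRimp A B C E G0)
  have "ms2 (add_mset (Disj P Q) G)" by (rule ms2_of_eq[OF s_LRimp.prems]) (use s_LRimp in simp_all)
  moreover have "Imp C E \<in># G" using mem_of_eq[OF s_LRimp.prems] by simp
  ultimately show ?case using s_LRimp by (intro s_LRimp') (simp_all add: frm_frm2)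
next
  case (s_Rimp A B G0)
  then show ?case by (intro gwfs.s_Rimp) (auto simp: frm_frm2)
qed

lemma gwfs_invLdisj2: "gwfs D Z \<Longrightarrow> D = add_mset (Disj P Q) G \<Longrightarrow> gwfs (add_mset Q G) Z"
proof (induction arbitrary: G rule: gwfs.induct)
  case (s_id G0 p)
  have "ms2 (add_mset (Disj P Q) G)" by (rule ms2_of_eq[OF s_id.prems]) (use s_id in simp_all)
  moreover have "Atom p \<in># G" using mem_of_eq[OF s_id.prems] by simp
  ultimately show ?case by (intro s_id') (simp_all add: frm_frm2)
next
  case (s_bot G0 Z)
  have "ms2 (add_mset (Disj P Q) G)" by (rule ms2_of_eq[OF s_bot.prems]) (use s_bot in simp_all)
  moreover have "Bot \<in># G" using mem_of_eq[OF s_bot.prems] by simp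
  ultimately show ?case using s_bot by (intro s_bot') (simp_all add: frm_frm2)
next
  case (s_Lconj X Y G0 Z)
  from s_Lconj.prems show ?case
  proof (cases rule: add_mset_split)
    case 1 then show ?thesis using s_Lconj by simp
  next
    case (2 K)
    have "gwfs (add_mset Q (add_mset X (add_mset Y K))) Z"
      using s_Lconj.IH[of "add_mset X (add_mset Y K)"] 2 by (simp add: add_mset_commute)
    then have "gwfs (add_mset (Conj X Y) (add_mset Q K)) Z"
      by (intro gwfs.s_Lconj) (simp add: add_mset_commute)
    then show ?thesis using 2 by (simp add: add_mset_commute)
  qed
next
  case (s_Rconj G0 X Y) then show ?case by (simp add: gwfs.s_Rconj)
next
  case (s_Ldisj X G0 Z Y)
  from s_Ldisj.prems show ?case
  proof (cases rule: add_mset_split)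
    case 1 then show ?thesis using s_Ldisj by simp
  next
    case (2 K)
    have "gwfs (add_mset Q (add_mset X K)) Z"
      using s_Ldisj.IH(1)[of "add_mset X K"] 2 by (simp add: add_mset_commute)
    moreover have "gwfs (add_mset Q (add_mset Y K)) Z"
      using s_Ldisj.IH(2)[of "add_mset Y K"] 2 by (simp add: add_mset_commute)
    ultimately have "gwfs (add_mset (Disj X Y) (add_mset Q K)) Z"
      by (intro gwfs.s_Ldisj) (simp_all add: add_mset_commute)
    then show ?thesis using 2 by (simp add: add_mset_commute)
  qed
next
  case (s_Rdisjl G0 X Y) then show ?case by (simp add: gwfs.s_Rdisjl)
next
  case (s_Rdisjr G0 Y X) then show ?case by (simp add: gwfs.s_Rdisjr)
next
  case (s_Lmimp A B G0 Z)
  from s_Lmimp.prems show ?case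
  proof (cases rule: add_mset_split)
    case 1 then show ?thesis using s_Lmimp by simp
  next
    case (2 K)
    have "gwfs (add_mset Q (add_mset (MImp A B) K)) A"
      using s_Lmimp.IH(1)[of "add_mset (MImp A B) K"] 2 by (simp add: add_mset_commute)
    moreover have "gwfs (add_mset Q (add_mset B K)) Z"
      using s_Lmimp.IH(2)[of "add_mset B K"] 2 by (simp add: add_mset_commute)
    ultimately have "gwfs (add_mset (MImp A B) (add_mset Q K)) Z"
      using s_Lmimp.hyps by - (rule gwfs.s_Lmimp, simp_all add: add_mset_commute)
    then show ?thesis using 2 by (simp add: add_mset_commute)
  qed
next
  case (s_Rmimp A B G0)
  have "gwfs (add_mset Q (add_mset A G)) B"
    using s_Rmimp.IH[of "add_mset A G"] s_Rmimp.prems by (simp add: add_mset_commute)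
  then show ?case using s_Rmimp.hyps by (intro gwfs.s_Rmimp) (simp_all add: add_mset_commute)
next
  case (s_LRimp A B C E G0)
  have "ms2 (add_mset (Disj P Q) G)" by (rule ms2_of_eq[OF s_LRimp.prems]) (use s_LRimp in simp_all)
  moreover have "Imp C E \<in># G" using mem_of_eq[OF s_LRimp.prems] by simp
  ultimately show ?case using s_LRimp by (intro s_LRimp') (simp_all add: frm_frm2)
next
  case (s_Rimp A B G0)
  then show ?case by (intro gwfs.s_Rimp) (auto simp: frm_frm2)
qed

lemma gwfs_invLmimp: "gwfs D Z \<Longrightarrow> D = add_mset (MImp P Q) G \<Longrightarrow> gwfs (add_mset Q G) Z"
proof (induction arbitrary: G rule: gwfs.induct)
  case (s_id G0 p)
  have "ms2 (add_mset (MImp P Q) G)" by (rule ms2_of_eq[OF s_id.prems]) (use s_id in simp_all)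
  moreover have "Atom p \<in># G" using mem_of_eq[OF s_id.prems] by simp
  ultimately show ?case by (intro s_id') (simp_all add: frm_frm2)
next
  case (s_bot G0 Z)
  have "ms2 (add_mset (MImp P Q) G)" by (rule ms2_of_eq[OF s_bot.prems]) (use s_bot in simp_all)
  moreover have "Bot \<in># G" using mem_of_eq[OF s_bot.prems] by simp
  ultimately show ?case using s_bot by (intro s_bot') (simp_all add: frm_frm2)
next
  case (s_Lconj X Y G0 Z)
  from s_Lconj.prems show ?case
  proof (cases rule: add_mset_split)
    case 1 then show ?thesis using s_Lconj by simp
  next
    case (2 K)
    have "gwfs (add_mset Q (add_mset X (add_mset Y K))) Z"
      using s_Lconj.IH[of "add_mset X (add_mset Y K)"] 2 by (simp add: add_mset_commute)
    then have "gwfs (add_mset (Conj X Y) (add_mset Q K)) Z"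
      by (intro gwfs.s_Lconj) (simp add: add_mset_commute)
    then show ?thesis using 2 by (simp add: add_mset_commute)
  qed
next
  case (s_Rconj G0 X Y) then show ?case by (simp add: gwfs.s_Rconj)
next
  case (s_Ldisj X G0 Z Y)
  from s_Ldisj.prems show ?case
  proof (cases rule: add_mset_split)
    case 1 then show ?thesis using s_Ldisj by simp
  next
    case (2 K)
    have "gwfs (add_mset Q (add_mset X K)) Z"
      using s_Ldisj.IH(1)[of "add_mset X K"] 2 by (simp add: add_mset_commute)
    moreover have "gwfs (add_mset Q (add_mset Y K)) Z"
      using s_Ldisj.IH(2)[of "add_mset Y K"] 2 by (simp add: add_mset_commute)
    ultimately have "gwfs (add_mset (Disj X Y) (add_mset Q K)) Z"
      by (intro gwfs.s_Ldisj) (simp_all add: add_mset_commute)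
    then show ?thesis using 2 by (simp add: add_mset_commute)
  qed
next
  case (s_Rdisjl G0 X Y) then show ?case by (simp add: gwfs.s_Rdisjl)
next
  case (s_Rdisjr G0 Y X) then show ?case by (simp add: gwfs.s_Rdisjr)
next
  case (s_Lmimp A B G0 Z)
  from s_Lmimp.prems show ?case
  proof (cases rule: add_mset_split)
    case 1 then show ?thesis using s_Lmimp by simp
  next
    case (2 K)
    have "gwfs (add_mset Q (add_mset (MImp A B) K)) A"
      using s_Lmimp.IH(1)[of "add_mset (MImp A B) K"] 2 by (simp add: add_mset_commute)
    moreover have "gwfs (add_mset Q (add_mset B K)) Z"
      using s_Lmimp.IH(2)[of "add_mset B K"] 2 by (simp add: add_mset_commute)
    ultimately have "gwfs (add_mset (MImp A B) (add_mset Q K)) Z"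
      using s_Lmimp.hyps by - (rule gwfs.s_Lmimp, simp_all add: add_mset_commute)
    then show ?thesis using 2 by (simp add: add_mset_commute)
  qed
next
  case (s_Rmimp A B G0)
  have "gwfs (add_mset Q (add_mset A G)) B"
    using s_Rmimp.IH[of "add_mset A G"] s_Rmimp.prems by (simp add: add_mset_commute)
  then show ?case using s_Rmimp.hyps by (intro gwfs.s_Rmimp) (simp_all add: add_mset_commute)
next
  case (s_LRimp A B C E G0)
  have "ms2 (add_mset (MImp P Q) G)" by (rule ms2_of_eq[OF s_LRimp.prems]) (use s_LRimp in simp_all)
  moreover have "Imp C E \<in># G" using mem_of_eq[OF s_LRimp.prems] by simp
  ultimately show ?case using s_LRimp by (intro s_LRimp') (simp_all add: frm_frm2)
next
  case (s_Rimp A B G0)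
  then show ?case by (intro gwfs.s_Rimp) (auto simp: frm_frm2)
qed




lemma gwfs_invRconj1: "gwfs G W \<Longrightarrow> W = Conj P Q \<Longrightarrow> gwfs (G) P"
proof (induction rule: gwfs.induct)
  case (s_id G p) then show ?case by simp
next
  case (s_bot G Z) then show ?case by (intro s_bot') (auto )
next
  case (s_Lconj X Y G Z)
  then have "gwfs (add_mset X (add_mset Y G)) P" by simp
  then have "gwfs (add_mset (Conj X Y) (G)) P" by (intro gwfs.s_Lconj) (simp add: add_mset_commute)
  then show ?case by (simp add: add_mset_commute)
next
  case (s_Rconj G X Y) then show ?case by simp
next
  case (s_Ldisj X G Z Y)
  then have "gwfs (add_mset X G) P" "gwfs (add_mset Y G) P" by simp_all
  then have "gwfs (add_mset (Disj X Y) (G)) P" by (intro gwfs.s_Ldisj) (simp_all add: add_mset_commute)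
  then show ?case by (simp add: add_mset_commute)
next
  case (s_Rdisjl G X Y) then show ?case by simp
next
  case (s_Rdisjr G Y X) then show ?case by simp
next
  case (s_Lmimp A B G Z)
  then have "gwfs (add_mset B G) P" by simp
  moreover have "gwfs (add_mset (MImp A B) G) A" using s_Lmimp.hyps(3) by simp
  ultimately have "gwfs (add_mset (MImp A B) (G)) P"
    using s_Lmimp.hyps by - (rule gwfs.s_Lmimp, simp_all add: add_mset_commute)
  then show ?case by (simp add: add_mset_commute)
next
  case (s_Rmimp A B G) then show ?case by simp
next
  case (s_LRimp A B C E G) then show ?case by simp
next
  case (s_Rimp A B G) then show ?case by simp
qed

lemma gwfs_invRconj2: "gwfs G W \<Longrightarrow> W = Conj P Q \<Longrightarrow> gwfs (G) Q"
proof (induction rule: gwfs.induct)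
  case (s_id G p) then show ?case by simp
next
  case (s_bot G Z) then show ?case by (intro s_bot') (auto )
next
  case (s_Lconj X Y G Z)
  then have "gwfs (add_mset X (add_mset Y G)) Q" by simp
  then have "gwfs (add_mset (Conj X Y) (G)) Q" by (intro gwfs.s_Lconj) (simp add: add_mset_commute)
  then show ?case by (simp add: add_mset_commute)
next
  case (s_Rconj G X Y) then show ?case by simp
next
  case (s_Ldisj X G Z Y)
  then have "gwfs (add_mset X G) Q" "gwfs (add_mset Y G) Q" by simp_all
  then have "gwfs (add_mset (Disj X Y) (G)) Q" by (intro gwfs.s_Ldisj) (simp_all add: add_mset_commute)
  then show ?case by (simp add: add_mset_commute)
next
  case (s_Rdisjl G X Y) then show ?case by simp
next
  case (s_Rdisjr G Y X) then show ?case by simp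
next
  case (s_Lmimp A B G Z)
  then have "gwfs (add_mset B G) Q" by simp
  moreover have "gwfs (add_mset (MImp A B) G) A" using s_Lmimp.hyps(3) by simp
  ultimately have "gwfs (add_mset (MImp A B) (G)) Q"
    using s_Lmimp.hyps by - (rule gwfs.s_Lmimp, simp_all add: add_mset_commute)
  then show ?case by (simp add: add_mset_commute)
next
  case (s_Rmimp A B G) then show ?case by simp
next
  case (s_LRimp A B C E G) then show ?case by simp
next
  case (s_Rimp A B G) then show ?case by simp
qed

lemma gwfs_botR: "gwfs G W \<Longrightarrow> W = Bot \<Longrightarrow> is_frm2 V \<Longrightarrow> gwfs (G) V"
proof (induction rule: gwfs.induct)
  case (s_id G p) then show ?case by simp
next
  case (s_bot G Z) then show ?case by (intro s_bot') (auto )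
next
  case (s_Lconj X Y G Z)
  then have "gwfs (add_mset X (add_mset Y G)) V" by simp
  then have "gwfs (add_mset (Conj X Y) (G)) V" by (intro gwfs.s_Lconj) (simp add: add_mset_commute)
  then show ?case by (simp add: add_mset_commute)
next
  case (s_Rconj G X Y) then show ?case by simp
next
  case (s_Ldisj X G Z Y)
  then have "gwfs (add_mset X G) V" "gwfs (add_mset Y G) V" by simp_all
  then have "gwfs (add_mset (Disj X Y) (G)) V" by (intro gwfs.s_Ldisj) (simp_all add: add_mset_commute)
  then show ?case by (simp add: add_mset_commute)
next
  case (s_Rdisjl G X Y) then show ?case by simp
next
  case (s_Rdisjr G Y X) then show ?case by simp
next
  case (s_Lmimp A B G Z)
  then have "gwfs (add_mset B G) V" by simp
  moreover have "gwfs (add_mset (MImp A B) G) A" using s_Lmimp.hyps(3) by simp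
  ultimately have "gwfs (add_mset (MImp A B) (G)) V"
    using s_Lmimp.hyps by - (rule gwfs.s_Lmimp, simp_all add: add_mset_commute)
  then show ?case by (simp add: add_mset_commute)
next
  case (s_Rmimp A B G) then show ?case by simp
next
  case (s_LRimp A B C E G) then show ?case by simp
next
  case (s_Rimp A B G) then show ?case by simp
qed

lemma gwfs_invRmimp: "gwfs G W \<Longrightarrow> W = MImp P Q \<Longrightarrow> gwfs (add_mset P G) Q"
proof (induction rule: gwfs.induct)
  case (s_id G p) then show ?case by simp
next
  case (s_bot G Z) then show ?case by (intro s_bot') (auto simp: frm_frm2)
next
  case (s_Lconj X Y G Z)
  then have "gwfs (add_mset P (add_mset X (add_mset Y G))) Q" by simp
  then have "gwfs (add_mset (Conj X Y) (add_mset P G)) Q" by (intro gwfs.s_Lconj) (simp add: add_mset_commute)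
  then show ?case by (simp add: add_mset_commute)
next
  case (s_Rconj G X Y) then show ?case by simp
next
  case (s_Ldisj X G Z Y)
  then have "gwfs (add_mset P (add_mset X G)) Q" "gwfs (add_mset P (add_mset Y G)) Q" by simp_all
  then have "gwfs (add_mset (Disj X Y) (add_mset P G)) Q" by (intro gwfs.s_Ldisj) (simp_all add: add_mset_commute)
  then show ?case by (simp add: add_mset_commute)
next
  case (s_Rdisjl G X Y) then show ?case by simp
next
  case (s_Rdisjr G Y X) then show ?case by simp
next
  case (s_Lmimp A B G Z)
  then have "gwfs (add_mset P (add_mset B G)) Q" by simp
  moreover have "gwfs (add_mset P (add_mset (MImp A B) G)) A" using gwfs_weak[OF s_Lmimp.hyps(3), of P] gwfs_wf[OF s_Lmimp.hyps(4)] s_Lmimp.prems by (simp add: add_mset_commute frm_frm2)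
  ultimately have "gwfs (add_mset (MImp A B) (add_mset P G)) Q"
    using s_Lmimp.hyps by - (rule gwfs.s_Lmimp, simp_all add: add_mset_commute)
  then show ?case by (simp add: add_mset_commute)
next
  case (s_Rmimp A B G) then show ?case by simp
next
  case (s_LRimp A B C E G) then show ?case by simp
next
  case (s_Rimp A B G) then show ?case by simp
qed




fun msz :: "fm \<Rightarrow> nat" where
  "msz (Atom p) = 1"
| "msz Bot = 1"
| "msz (Conj A B) = msz A + msz B + 1"
| "msz (Disj A B) = msz A + msz B + 1"
| "msz (Imp A B) = msz A + msz B + 2"
| "msz (MImp A B) = msz A + msz B + 1"

definition cutP :: "fm \<Rightarrow> bool" where
  "cutP X \<longleftrightarrow> (\<forall>G Z. gwfs G X \<longrightarrow> gwfs (add_mset X G) Z \<longrightarrow> gwfs G Z)"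

lemma cutPD: "cutP X \<Longrightarrow> gwfs G X \<Longrightarrow> gwfs (add_mset X G) Z \<Longrightarrow> gwfs G Z"
  unfolding cutP_def by blast

lemma disj_lemma:
  assumes cP: "cutP P" and cQ: "cutP Q"
  shows "gwfs G W \<Longrightarrow> W = Disj P Q \<Longrightarrow> gwfs (add_mset P G) Z \<Longrightarrow> gwfs (add_mset Q G) Z \<Longrightarrow> gwfs G Z"
proof (induction rule: gwfs.induct)
  case (s_id G p) then show ?case by simp
next
  case (s_bot G Z') then show ?case using gwfs_wf[OF s_bot.prems(2)] by (intro s_bot') auto
next
  case (s_Lconj X Y G W)
  have "gwfs (add_mset X (add_mset Y G)) Z"
  proof (rule s_Lconj.IH[OF s_Lconj.prems(1)])
    show "gwfs (add_mset P (add_mset X (add_mset Y G))) Z"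
      using gwfs_invLconj[OF s_Lconj.prems(2), of X Y "add_mset P G"] by (simp add: add_mset_commute)
    show "gwfs (add_mset Q (add_mset X (add_mset Y G))) Z"
      using gwfs_invLconj[OF s_Lconj.prems(3), of X Y "add_mset Q G"] by (simp add: add_mset_commute)
  qed
  then show ?case by (rule gwfs.s_Lconj)
next
  case (s_Rconj G X Y) then show ?case by simp
next
  case (s_Ldisj X G W Y)
  have "gwfs (add_mset X G) Z"
  proof (rule s_Ldisj.IH(1)[OF s_Ldisj.prems(1)])
    show "gwfs (add_mset P (add_mset X G)) Z"
      using gwfs_invLdisj1[OF s_Ldisj.prems(2), of X Y "add_mset P G"] by (simp add: add_mset_commute)
    show "gwfs (add_mset Q (add_mset X G)) Z"
      using gwfs_invLdisj1[OF s_Ldisj.prems(3), of X Y "add_mset Q G"] by (simp add: add_mset_commute)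
  qed
  moreover have "gwfs (add_mset Y G) Z"
  proof (rule s_Ldisj.IH(2)[OF s_Ldisj.prems(1)])
    show "gwfs (add_mset P (add_mset Y G)) Z"
      using gwfs_invLdisj2[OF s_Ldisj.prems(2), of X Y "add_mset P G"] by (simp add: add_mset_commute)
    show "gwfs (add_mset Q (add_mset Y G)) Z"
      using gwfs_invLdisj2[OF s_Ldisj.prems(3), of X Y "add_mset Q G"] by (simp add: add_mset_commute)
  qed
  ultimately show ?case by (rule gwfs.s_Ldisj)
next
  case (s_Rdisjl G X Y) then show ?case using cutPD[OF cP] by simp
next
  case (s_Rdisjr G Y X) then show ?case using cutPD[OF cQ] by simp
next
  case (s_Lmimp A B G W)
  have "gwfs (add_mset B G) Z"
  proof (rule s_Lmimp.IH(2)[OF s_Lmimp.prems(1)])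
    show "gwfs (add_mset P (add_mset B G)) Z"
      using gwfs_invLmimp[OF s_Lmimp.prems(2), of A B "add_mset P G"] by (simp add: add_mset_commute)
    show "gwfs (add_mset Q (add_mset B G)) Z"
      using gwfs_invLmimp[OF s_Lmimp.prems(3), of A B "add_mset Q G"] by (simp add: add_mset_commute)
  qed
  then show ?case using s_Lmimp.hyps by - (rule gwfs.s_Lmimp, simp_all)
next
  case (s_Rmimp A B G) then show ?case by simp
next
  case (s_LRimp A B C E G) then show ?case by simp
next
  case (s_Rimp A B G) then show ?case by simp
qed

lemma imp_lemma:
  assumes cP: "cutP (MImp C E)" and A': "is_frm A'" and B': "is_frm B'"
    and prem: "gwfs {#MImp C E, A'#} B'"
  shows "gwfs G W \<Longrightarrow> W = Imp C E \<Longrightarrow> gwfs G (Imp A' B')"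
proof (induction rule: gwfs.induct)
  case (s_id G p) then show ?case by simp
next
  case (s_bot G Z') then show ?case using A' B' by (intro s_bot') (auto intro: frm_frm2)
next
  case (s_Lconj X Y G W) then show ?case by (intro gwfs.s_Lconj) simp
next
  case (s_Rconj G X Y) then show ?case by simp
next
  case (s_Ldisj X G W Y) then show ?case by (intro gwfs.s_Ldisj) simp_all
next
  case (s_Rdisjl G X Y) then show ?case by simp
next
  case (s_Rdisjr G Y X) then show ?case by simp
next
  case (s_Lmimp A B G W) then show ?case by - (rule gwfs.s_Lmimp, simp_all)
next
  case (s_Rmimp A B G) then show ?case by simp
next
  case (s_LRimp A B C0 E0 G)
  have ce: "C = A" "E = B" using s_LRimp.prems by simp_all
  have "gwfs {#MImp C0 E0, A'#} (MImp C E)"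
  proof (rule gwfs.s_Rmimp)
    show "is_frm C" "is_frm E" using s_LRimp.hyps ce by simp_all
    show "gwfs (add_mset C {#MImp C0 E0, A'#}) E"
      using gwfs_weak[OF s_LRimp.hyps(6), of A'] A' ce by (simp add: add_mset_commute frm_frm2)
  qed
  moreover have "gwfs (add_mset (MImp C E) {#MImp C0 E0, A'#}) B'"
    using gwfs_weak[OF prem, of "MImp C0 E0"] s_LRimp.hyps by (simp add: add_mset_commute)
  ultimately have "gwfs {#MImp C0 E0, A'#} B'" by (rule cutPD[OF cP])
  then show ?case using s_LRimp.hyps A' B' by (intro gwfs.s_LRimp) simp_all
next
  case (s_Rimp A B G)
  have ce: "C = A" "E = B" using s_Rimp.prems by simp_all
  have "gwfs {#A'#} (MImp C E)"
  proof (rule gwfs.s_Rmimp)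
    show "is_frm C" "is_frm E" using s_Rimp.hyps ce by simp_all
    show "gwfs (add_mset C {#A'#}) E"
      using gwfs_weak[OF s_Rimp.hyps(4), of A'] A' ce by (simp add: add_mset_commute frm_frm2)
  qed
  moreover have "gwfs (add_mset (MImp C E) {#A'#}) B'"
    using prem by (simp add: add_mset_commute)
  ultimately have "gwfs {#A'#} B'" by (rule cutPD[OF cP])
  then show ?case using s_Rimp.hyps A' B' by (intro gwfs.s_Rimp) simp_all
qed




lemma cut_inner:
  assumes IHX: "\<And>Y. msz Y < msz X \<Longrightarrow> cutP Y"
  shows "gwfs D Z \<Longrightarrow> D = add_mset X G \<Longrightarrow> gwfs G X \<Longrightarrow> gwfs G Z"
proof (induction arbitrary: G rule: gwfs.induct)
  case (s_id G0 p)
  have mG: "ms2 G" using gwfs_wf[OF s_id.prems(2)] by simp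
  from s_id.prems(1) show ?case
  proof (cases rule: add_mset_split)
    case 1 then show ?thesis using s_id.prems(2) by simp
  next
    case (2 K) then show ?thesis using mG by (intro s_id') simp_all
  qed
next
  case (s_bot G0 Z)
  have mG: "ms2 G" using gwfs_wf[OF s_bot.prems(2)] by simp
  from s_bot.prems(1) show ?case
  proof (cases rule: add_mset_split)
    case 1 then show ?thesis using s_bot.prems(2) s_bot.hyps by - (rule gwfs_botR, simp_all)
  next
    case (2 K) then show ?thesis using mG s_bot.hyps by (intro s_bot') simp_all
  qed
next
  case (s_Lconj A B G0 Z)
  from s_Lconj.prems(1) show ?case
  proof (cases rule: add_mset_split)
    case 1
    have gA: "gwfs G A" and gB: "gwfs G B"
      using gwfs_invRconj1[OF s_Lconj.prems(2)] gwfs_invRconj2[OF s_Lconj.prems(2)] 1(1)[symmetric] 1(2) by simp_all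
    have cA: "cutP A" and cB: "cutP B" using IHX 1(1)[symmetric] 1(2) by simp_all
    have "gwfs (add_mset B G) A" using gwfs_weak[OF gA] gwfs_wf[OF gB] by simp
    moreover have "gwfs (add_mset A (add_mset B G)) Z" using s_Lconj.hyps 1(1)[symmetric] 1(2) by simp
    ultimately have "gwfs (add_mset B G) Z" by (rule cutPD[OF cA])
    then show ?thesis by (rule cutPD[OF cB gB])
  next
    case (2 K)
    have "gwfs (add_mset A (add_mset B K)) Z"
    proof (rule s_Lconj.IH)
      show "add_mset A (add_mset B G0) = add_mset X (add_mset A (add_mset B K))"
        using 2 by (simp add: add_mset_commute)
      show "gwfs (add_mset A (add_mset B K)) X"
        using gwfs_invLconj[OF s_Lconj.prems(2)] 2 by simp
    qed
    then show ?thesis using 2 by (simp add: gwfs.s_Lconj)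
  qed
next
  case (s_Rconj G0 A B) then show ?case by (simp add: gwfs.s_Rconj)
next
  case (s_Ldisj A G0 Z B)
  from s_Ldisj.prems(1) show ?case
  proof (cases rule: add_mset_split)
    case 1
    have cA: "cutP A" and cB: "cutP B" using IHX 1(1)[symmetric] 1(2) by simp_all
    show ?thesis
      by (rule disj_lemma[OF cA cB s_Ldisj.prems(2)]) (use s_Ldisj.hyps 1(1)[symmetric] 1(2) in simp_all)
  next
    case (2 K)
    have "gwfs (add_mset A K) Z"
    proof (rule s_Ldisj.IH(1))
      show "add_mset A G0 = add_mset X (add_mset A K)"
        using 2 by (simp add: add_mset_commute)
      show "gwfs (add_mset A K) X"
        using gwfs_invLdisj1[OF s_Ldisj.prems(2)] 2 by simp
    qed
    moreover have "gwfs (add_mset B K) Z"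
    proof (rule s_Ldisj.IH(2))
      show "add_mset B G0 = add_mset X (add_mset B K)"
        using 2 by (simp add: add_mset_commute)
      show "gwfs (add_mset B K) X"
        using gwfs_invLdisj2[OF s_Ldisj.prems(2)] 2 by simp
    qed
    ultimately show ?thesis using 2 by (simp add: gwfs.s_Ldisj)
  qed
next
  case (s_Rdisjl G0 A B) then show ?case by (simp add: gwfs.s_Rdisjl)
next
  case (s_Rdisjr G0 B A) then show ?case by (simp add: gwfs.s_Rdisjr)
next
  case (s_Lmimp A B G0 Z)
  from s_Lmimp.prems(1) show ?case
  proof (cases rule: add_mset_split)
    case 1
    have cA: "cutP A" and cB: "cutP B" using IHX 1(1)[symmetric] 1(2) by simp_all
    have gA: "gwfs G A" using s_Lmimp.IH(1) s_Lmimp.prems 1(1)[symmetric] 1(2) by simp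
    have "gwfs (add_mset A G) B" using gwfs_invRmimp[OF s_Lmimp.prems(2)] 1(1)[symmetric] 1(2) by simp
    then have gB: "gwfs G B" by (rule cutPD[OF cA gA])
    show ?thesis by (rule cutPD[OF cB gB]) (use s_Lmimp.hyps 1(1)[symmetric] 1(2) in simp)
  next
    case (2 K)
    have "gwfs (add_mset (MImp A B) K) A"
    proof (rule s_Lmimp.IH(1))
      show "add_mset (MImp A B) G0 = add_mset X (add_mset (MImp A B) K)"
        using 2 by (simp add: add_mset_commute)
      show "gwfs (add_mset (MImp A B) K) X"
        using s_Lmimp.prems(2) 2 by simp
    qed
    moreover have "gwfs (add_mset B K) Z"
    proof (rule s_Lmimp.IH(2))
      show "add_mset B G0 = add_mset X (add_mset B K)"
        using 2 by (simp add: add_mset_commute)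
      show "gwfs (add_mset B K) X"
        using gwfs_invLmimp[OF s_Lmimp.prems(2)] 2 by simp
    qed
    ultimately show ?thesis using 2 s_Lmimp.hyps by - (simp, rule gwfs.s_Lmimp, simp_all)
  qed
next
  case (s_Rmimp A B G0)
  have "gwfs (add_mset A G) B"
  proof (rule s_Rmimp.IH)
    show "add_mset A G0 = add_mset X (add_mset A G)"
      using s_Rmimp.prems by (simp add: add_mset_commute)
    show "gwfs (add_mset A G) X"
      using gwfs_weak[OF s_Rmimp.prems(2)] s_Rmimp.hyps by (simp add: frm_frm2)
  qed
  then show ?case using s_Rmimp.hyps by (intro gwfs.s_Rmimp)
next
  case (s_LRimp A B C E G0)
  have mG: "ms2 G" using gwfs_wf[OF s_LRimp.prems(2)] by simp
  from s_LRimp.prems(1) show ?case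
  proof (cases rule: add_mset_split)
    case 1
    have cM: "cutP (MImp C E)" using IHX 1(1)[symmetric] 1(2) by simp
    show ?thesis
      by (rule imp_lemma[OF cM _ _ _ s_LRimp.prems(2)]) (use s_LRimp.hyps 1(1)[symmetric] 1(2) in simp_all)
  next
    case (2 K) then show ?thesis using mG s_LRimp.hyps by (intro s_LRimp') simp_all
  qed
next
  case (s_Rimp A B G0)
  have mG: "ms2 G" using gwfs_wf[OF s_Rimp.prems(2)] by simp
  then show ?case using s_Rimp.hyps by (intro gwfs.s_Rimp) simp_all
qed

lemma cutP_all: "cutP X"
proof (induction "msz X" arbitrary: X rule: less_induct)
  case less
  show ?case unfolding cutP_def using cut_inner[OF less] by blast
qed

theorem gwfs_cut: "gwfs G X \<Longrightarrow> gwfs (add_mset X G) Z \<Longrightarrow> gwfs G Z"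
  using cutPD[OF cutP_all] by blast




lemma gwfs_id: "is_frm2 X \<Longrightarrow> ms2 G \<Longrightarrow> gwfs (add_mset X G) X"
proof (induction X arbitrary: G)
  case (Atom p) then show ?case by (intro gwfs.s_id)
next
  case Bot then show ?case by (intro gwfs.s_bot) simp_all
next
  case (Conj X Y)
  have "gwfs (add_mset X (add_mset Y G)) X" using Conj by simp
  moreover have "gwfs (add_mset Y (add_mset X G)) Y" using Conj by simp
  ultimately show ?case by (intro gwfs.s_Lconj gwfs.s_Rconj) (simp_all add: add_mset_commute)
next
  case (Disj X Y)
  have "gwfs (add_mset X G) (Disj X Y)" using Disj by (intro gwfs.s_Rdisjl) simp_all
  moreover have "gwfs (add_mset Y G) (Disj X Y)" using Disj by (intro gwfs.s_Rdisjr) simp_all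
  ultimately show ?case by (intro gwfs.s_Ldisj)
next
  case (Imp A B)
  have fA: "is_frm A" "is_frm B" using Imp by simp_all
  have "gwfs (add_mset A {#MImp A B#}) A" using Imp fA by (simp add: frm_frm2)
  moreover have "gwfs (add_mset B {#A#}) B" using Imp fA by (simp add: frm_frm2)
  ultimately have "gwfs {#MImp A B, A#} B" using fA
    by - (rule gwfs.s_Lmimp, simp_all add: add_mset_commute)
  then show ?case using fA Imp by (intro gwfs.s_LRimp) simp_all
next
  case (MImp A B)
  have fA: "is_frm A" "is_frm B" using MImp by simp_all
  have "gwfs (add_mset A (add_mset (MImp A B) G)) A" using MImp fA by (simp add: frm_frm2)
  moreover have "gwfs (add_mset B (add_mset A G)) B" using MImp fA by (simp add: frm_frm2)
  ultimately have "gwfs (add_mset (MImp A B) (add_mset A G)) B" using fA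
    by - (rule gwfs.s_Lmimp, simp_all add: add_mset_commute)
  then show ?case using fA by (intro gwfs.s_Rmimp) (simp_all add: add_mset_commute)
qed

lemma hthm_frm: "hthm F \<Longrightarrow> is_frm F"
  by (induction rule: hthm.induct) auto

lemma gwfs_empty_Imp0: "gwfs G W \<Longrightarrow> G = {#} \<Longrightarrow> W = Imp A B \<Longrightarrow> gwfs {#A#} B"
  by (cases rule: gwfs.cases) auto
lemma gwfs_empty_Imp: "gwfs {#} (Imp A B) \<Longrightarrow> gwfs {#A#} B"
  using gwfs_empty_Imp0 by blast

lemma gwfs_top: "gwfs {#} Top"
  unfolding Top_def by (intro gwfs.s_Rimp) (auto intro: gwfs.s_bot)

lemma hthm_gwfs: "hthm F \<Longrightarrow> gwfs {#} F"
proof (induction rule: hthm.induct)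
  case (ax_or1 A B) then show ?case
    by (intro gwfs.s_Rimp gwfs.s_Rdisjl) (auto intro: gwfs_id[of A "{#}", simplified] frm_frm2)
next
  case (ax_or2 A B) then show ?case
    by (intro gwfs.s_Rimp gwfs.s_Rdisjr) (auto intro: gwfs_id[of B "{#}", simplified] frm_frm2)
next
  case (ax_and1 A B)
  have "gwfs {#A, B#} A" using ax_and1 gwfs_id[of A "{#B#}"] by (simp add: frm_frm2)
  then show ?case using ax_and1 by (intro gwfs.s_Rimp) (auto intro: gwfs.s_Lconj[of _ _ "{#}", simplified])
next
  case (ax_and2 A B)
  have "gwfs {#A, B#} B" using ax_and2 gwfs_id[of B "{#A#}"] by (simp add: frm_frm2 add_mset_commute)
  then show ?case using ax_and2 by (intro gwfs.s_Rimp) (auto intro: gwfs.s_Lconj[of _ _ "{#}", simplified])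
next
  case (ax_dist A B C)
  have fr: "is_frm2 A" "is_frm2 B" "is_frm2 C" using ax_dist by (simp_all add: frm_frm2)
  have "gwfs {#B, A#} (Disj (Conj A B) (Conj A C))"
    using fr gwfs_id[of A "{#B#}"] gwfs_id[of B "{#A#}"]
    by (intro gwfs.s_Rdisjl gwfs.s_Rconj) (simp_all add: add_mset_commute)
  moreover have "gwfs {#C, A#} (Disj (Conj A B) (Conj A C))"
    using fr gwfs_id[of A "{#C#}"] gwfs_id[of C "{#A#}"]
    by (intro gwfs.s_Rdisjr gwfs.s_Rconj) (simp_all add: add_mset_commute)
  ultimately have "gwfs {#Disj B C, A#} (Disj (Conj A B) (Conj A C))"
    by (intro gwfs.s_Ldisj)
  then have "gwfs {#Conj A (Disj B C)#} (Disj (Conj A B) (Conj A C))"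
    by (intro gwfs.s_Lconj[of _ _ "{#}", simplified]) (simp add: add_mset_commute)
  then show ?case using ax_dist by (intro gwfs.s_Rimp) simp_all
next
  case (ax_id A) then show ?case
    by (intro gwfs.s_Rimp) (auto intro: gwfs_id[of A "{#}", simplified] frm_frm2)
next
  case (ax_bot A) then show ?case
    by (intro gwfs.s_Rimp) (auto intro: gwfs.s_bot[of "{#}", simplified] frm_frm2)
next
  case (r_mp A B)
  have "gwfs {#A#} B" using gwfs_empty_Imp[OF r_mp.IH(2)] by simp
  then show ?case using gwfs_cut[OF r_mp.IH(1)] by simp
next
  case (r_wk A B)
  then show ?case using gwfs_weak[OF r_wk.IH, of B] hthm_frm[OF r_wk.hyps(1)]
    by (intro gwfs.s_Rimp) (simp_all add: frm_frm2)
next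
  case (r_trans A B C)
  have fr: "is_frm A" "is_frm B" "is_frm C" using hthm_frm[OF r_trans.hyps(1)] hthm_frm[OF r_trans.hyps(2)] by simp_all
  have ab: "gwfs {#A#} B" using gwfs_empty_Imp[OF r_trans.IH(1)] by simp
  have bc: "gwfs {#B#} C" using gwfs_empty_Imp[OF r_trans.IH(2)] by simp
  have "gwfs (add_mset B {#A#}) C" using gwfs_weak[OF bc, of A] fr by (simp add: frm_frm2 add_mset_commute)
  then have "gwfs {#A#} C" by (rule gwfs_cut[OF ab])
  then show ?case using fr by (intro gwfs.s_Rimp) simp_all
next
  case (r_conjI A B C)
  have fr: "is_frm A" "is_frm B" "is_frm C" using hthm_frm[OF r_conjI.hyps(1)] hthm_frm[OF r_conjI.hyps(2)] by simp_all
  have "gwfs {#A#} B" using gwfs_empty_Imp[OF r_conjI.IH(1)] by simp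
  moreover have "gwfs {#A#} C" using gwfs_empty_Imp[OF r_conjI.IH(2)] by simp
  ultimately show ?case using fr by (intro gwfs.s_Rimp gwfs.s_Rconj) simp_all
next
  case (r_disjE A C B)
  have fr: "is_frm A" "is_frm B" "is_frm C" using hthm_frm[OF r_disjE.hyps(1)] hthm_frm[OF r_disjE.hyps(2)] by simp_all
  have "gwfs {#A#} C" using gwfs_empty_Imp[OF r_disjE.IH(1)] by simp
  moreover have "gwfs {#B#} C" using gwfs_empty_Imp[OF r_disjE.IH(2)] by simp
  ultimately show ?case using fr by (intro gwfs.s_Rimp gwfs.s_Ldisj[of _ "{#}", simplified]) simp_all
next
  case (r_adj A B) then show ?case by (intro gwfs.s_Rconj)
next
  case (r_N2 C A D B)
  have fr: "is_frm A" "is_frm B" "is_frm C" "is_frm D"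
    using hthm_frm[OF r_N2.hyps(1)] hthm_frm[OF r_N2.hyps(2)] by simp_all
  have c1: "gwfs {#C#} (Disj A D)" using gwfs_empty_Imp[OF r_N2.IH(1)] by simp
  have c2: "gwfs {#C, B#} D"
    using gwfs_invLconj[OF gwfs_empty_Imp[OF r_N2.IH(2)], of C B "{#}"] by (simp add: add_mset_commute)
  have l: "gwfs {#MImp A B, C#} (Disj A D)"
    using gwfs_weak[OF c1, of "MImp A B"] fr by (simp add: add_mset_commute)
  have r1: "gwfs (add_mset A {#MImp A B, C#}) D"
  proof -
    have "gwfs (add_mset A (add_mset (MImp A B) {#C#})) A" using fr by (intro gwfs_id) (simp_all add: frm_frm2)
    moreover have "gwfs (add_mset B (add_mset A {#C#})) D"
      using gwfs_weak[OF c2, of A] fr by (simp add: frm_frm2 add_mset_commute)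
    ultimately have "gwfs (add_mset (MImp A B) (add_mset A {#C#})) D" using fr
      by - (rule gwfs.s_Lmimp, simp_all add: add_mset_commute)
    then show ?thesis by (simp add: add_mset_commute)
  qed
  have r2: "gwfs (add_mset D {#MImp A B, C#}) D" using fr by (intro gwfs_id) (simp_all add: frm_frm2)
  have "gwfs (add_mset (Disj A D) {#MImp A B, C#}) D" using r1 r2 by (rule gwfs.s_Ldisj)
  then have "gwfs {#MImp A B, C#} D" by (rule gwfs_cut[OF l])
  then have "gwfs {#Imp A B#} (Imp C D)" using fr by (intro gwfs.s_LRimp[of _ _ _ _ "{#}", simplified]) simp_all
  then show ?case using fr by - (rule gwfs.s_Rimp, simp_all)
qed

lemma bigconj_frm: "\<forall>C\<in>set Gs. is_frm C \<Longrightarrow> is_frm (bigconj Gs)"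
  by (induction Gs rule: bigconj.induct) (auto simp: Top_def)

lemma bigconj_L: "gwfs (add_mset (bigconj Gs) G) Z \<Longrightarrow> Gs \<noteq> [] \<Longrightarrow> gwfs (mset Gs + G) Z"
proof (induction Gs arbitrary: G rule: bigconj.induct)
  case 1 then show ?case by simp
next
  case (2 A) then show ?case by simp
next
  case (3 A B Gs)
  have "gwfs (add_mset A (add_mset (bigconj (B # Gs)) G)) Z"
    using gwfs_invLconj[OF "3.prems"(1)] by simp
  then have "gwfs (add_mset (bigconj (B # Gs)) (add_mset A G)) Z" by (simp add: add_mset_commute)
  then have "gwfs (mset (B # Gs) + add_mset A G) Z" using "3.IH" by blast
  then show ?case by (simp add: add_mset_commute)
qed

lemma hthm_to_gwfs:
  assumes "\<forall>C\<in>set Gs. is_frm C" "hthm (Imp (bigconj Gs) A)"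
  shows "gwfs (mset Gs) A"
proof -
  have g: "gwfs {#bigconj Gs#} A" using gwfs_empty_Imp[OF hthm_gwfs[OF assms(2)]] by simp
  show ?thesis
  proof (cases "Gs = []")
    case True
    then have "gwfs (add_mset Top {#}) A" using g by simp
    then show ?thesis using gwfs_cut[OF gwfs_top] True by simp
  next
    case False then show ?thesis using bigconj_L[of Gs "{#}"] g by simp
  qed
qed




lemma gwf_wf: "gwf G D \<Longrightarrow> ms2 G \<and> ms2 D"
  by (induction rule: gwf.induct) (auto intro: frm_frm2)

lemma gwf_weak: "gwf G D \<Longrightarrow> ms2 G' \<Longrightarrow> ms2 D' \<Longrightarrow> gwf (G' + G) (D' + D)"
proof (induction rule: gwf.induct)
  case (g_id G D p) then show ?case using gwf.g_id[of "G'+G" "D'+D" p] by simp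
next
  case (g_bot G D) then show ?case using gwf.g_bot[of "G'+G" "D'+D"] by simp
next
  case (g_Lconj X Y G D) then show ?case using gwf.g_Lconj[of X Y "G'+G" "D'+D"] by simp
next
  case (g_Rconj G X D Y) then show ?case using gwf.g_Rconj[of "G'+G" X "D'+D" Y] by simp
next
  case (g_Ldisj X G D Y) then show ?case using gwf.g_Ldisj[of X "G'+G" "D'+D" Y] by simp
next
  case (g_Rdisj G X Y D) then show ?case using gwf.g_Rdisj[of "G'+G" X Y "D'+D"] by simp
next
  case (g_Lmimp A B G D) then show ?case using gwf.g_Lmimp[of A B "G'+G" "D'+D"] by simp
next
  case (g_Rmimp A B G D) then show ?case using gwf.g_Rmimp[of A B "G'+G" "D'+D"] by simp
next
  case (g_LRimp A B C E G D) then show ?case using gwf.g_LRimp[of A B C E "G'+G" "D'+D"] by simp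
next
  case (g_Rimp A B G D) then show ?case using gwf.g_Rimp[of A B "G'+G" "D'+D"] by simp
qed

lemma gwf_weakR: "gwf G D \<Longrightarrow> is_frm2 W \<Longrightarrow> gwf G (add_mset W D)"
  using gwf_weak[of G D "{#}" "{#W#}"] by simp

lemma g_id': "Atom p \<in># G \<Longrightarrow> Atom p \<in># D \<Longrightarrow> ms2 G \<Longrightarrow> ms2 D \<Longrightarrow> gwf G D"
proof -
  assume a: "Atom p \<in># G" "Atom p \<in># D" "ms2 G" "ms2 D"
  then obtain K L where K: "G = add_mset (Atom p) K" "D = add_mset (Atom p) L" by (blast dest: multi_member_split)
  show ?thesis unfolding K using a K by (intro gwf.g_id) simp_all
qed
lemma g_bot': "Bot \<in># G \<Longrightarrow> ms2 G \<Longrightarrow> ms2 D \<Longrightarrow> gwf G D"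
proof -
  assume a: "Bot \<in># G" "ms2 G" "ms2 D"
  then obtain K where K: "G = add_mset Bot K" by (blast dest: multi_member_split)
  show ?thesis unfolding K using a K by (intro gwf.g_bot) simp_all
qed
lemma g_LRimp': "Imp C E \<in># G \<Longrightarrow> Imp A B \<in># D \<Longrightarrow> ms2 G \<Longrightarrow> ms2 D \<Longrightarrow>
   gwf {#MImp C E, A#} {#B#} \<Longrightarrow> gwf G D"
proof -
  assume a: "Imp C E \<in># G" "Imp A B \<in># D" "ms2 G" "ms2 D" "gwf {#MImp C E, A#} {#B#}"
  then obtain K L where K: "G = add_mset (Imp C E) K" "D = add_mset (Imp A B) L" by (blast dest: multi_member_split)
  show ?thesis unfolding K using a K by (intro gwf.g_LRimp) simp_all
qed
lemma g_Rimp': "Imp A B \<in># D \<Longrightarrow> ms2 G \<Longrightarrow> ms2 D \<Longrightarrow> gwf {#A#} {#B#} \<Longrightarrow> gwf G D"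
proof -
  assume a: "Imp A B \<in># D" "ms2 G" "ms2 D" "gwf {#A#} {#B#}"
  then obtain L where K: "D = add_mset (Imp A B) L" by (blast dest: multi_member_split)
  show ?thesis unfolding K using a K by (intro gwf.g_Rimp) simp_all
qed




lemma gwf_invRconj1: "gwf G1 D1 \<Longrightarrow> D1 = add_mset (Conj P Q) D \<Longrightarrow> gwf G1 (add_mset P D)"
proof (induction arbitrary: D rule: gwf.induct)
  case (g_id G D' p)
  have "ms2 (add_mset (Conj P Q) D)" by (rule ms2_of_eq[OF g_id.prems]) (use g_id in simp_all)
  moreover have "Atom p \<in># D" using mem_of_eq[OF g_id.prems] by simp
  ultimately show ?case using g_id by - (rule g_id'[of p], simp_all)
next
  case (g_bot G D')
  have "ms2 (add_mset (Conj P Q) D)" using g_bot by simp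
  then show ?case using g_bot by - (rule g_bot', simp_all)
next
  case (g_Lconj X Y G D') show ?case using gwf.g_Lconj[OF g_Lconj.IH[OF g_Lconj.prems]] .
next
  case (g_Ldisj X G D' Y) show ?case using gwf.g_Ldisj[OF g_Ldisj.IH(1)[OF g_Ldisj.prems] g_Ldisj.IH(2)[OF g_Ldisj.prems]] .
next
  case (g_Lmimp A B G D')
  have "gwf G (add_mset P (add_mset A D))"
    by (rule g_Lmimp.IH(1)) (use g_Lmimp.prems in \<open>simp add: add_mset_commute\<close>)
  then have "gwf G (add_mset A (add_mset P D))" by (simp add: add_mset_commute)
  then show ?case using g_Lmimp.hyps g_Lmimp.IH(2)[OF g_Lmimp.prems] by - (rule gwf.g_Lmimp)
next
  case (g_Rconj G X D' Y)
  from g_Rconj.prems show ?case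
  proof (cases rule: add_mset_split)
    case 1 then show ?thesis using g_Rconj by simp
  next
    case (2 K)
    have "gwf G (add_mset P (add_mset X K))"
      by (rule g_Rconj.IH(1)) (use 2 in \<open>simp add: add_mset_commute\<close>)
    moreover have "gwf G (add_mset P (add_mset Y K))"
      by (rule g_Rconj.IH(2)) (use 2 in \<open>simp add: add_mset_commute\<close>)
    ultimately have "gwf G (add_mset (Conj X Y) (add_mset P K))"
      by (intro gwf.g_Rconj) (simp_all add: add_mset_commute)
    then show ?thesis using 2 by (simp add: add_mset_commute)
  qed
next
  case (g_Rdisj G X Y D')
  from g_Rdisj.prems show ?case
  proof (cases rule: add_mset_split)
    case 1 then show ?thesis using g_Rdisj by simp
  next
    case (2 K)
    have "gwf G (add_mset P (add_mset X (add_mset Y K)))"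
      by (rule g_Rdisj.IH) (use 2 in \<open>simp add: add_mset_commute\<close>)
    then have "gwf G (add_mset (Disj X Y) (add_mset P K))"
      by (intro gwf.g_Rdisj) (simp_all add: add_mset_commute)
    then show ?thesis using 2 by (simp add: add_mset_commute)
  qed
next
  case (g_Rmimp A B G D')
  from g_Rmimp.prems show ?case
  proof (cases rule: add_mset_split)
    case 1 then show ?thesis by simp
  next
    case (2 K)
    have "gwf (add_mset A G) (add_mset P (add_mset B K))"
      by (rule g_Rmimp.IH) (use 2 in \<open>simp add: add_mset_commute\<close>)
    then have "gwf G (add_mset (MImp A B) (add_mset P K))"
      using g_Rmimp.hyps by (intro gwf.g_Rmimp) (simp_all add: add_mset_commute)
    then show ?thesis using 2 by (simp add: add_mset_commute)
  qed
next
  case (g_LRimp A B C E G D')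
  have "ms2 (add_mset (Conj P Q) D)" by (rule ms2_of_eq[OF g_LRimp.prems]) (use g_LRimp in simp_all)
  moreover have "Imp A B \<in># D" using mem_of_eq[OF g_LRimp.prems] by simp
  ultimately show ?case using g_LRimp by - (rule g_LRimp'[of C E _ A B], simp_all)
next
  case (g_Rimp A B G D')
  have "ms2 (add_mset (Conj P Q) D)" by (rule ms2_of_eq[OF g_Rimp.prems]) (use g_Rimp in simp_all)
  moreover have "Imp A B \<in># D" using mem_of_eq[OF g_Rimp.prems] by simp
  ultimately show ?case using g_Rimp by - (rule g_Rimp'[of A B], simp_all)
qed

lemma gwf_invRconj2: "gwf G1 D1 \<Longrightarrow> D1 = add_mset (Conj P Q) D \<Longrightarrow> gwf G1 (add_mset Q D)"
proof (induction arbitrary: D rule: gwf.induct)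
  case (g_id G D' p)
  have "ms2 (add_mset (Conj P Q) D)" by (rule ms2_of_eq[OF g_id.prems]) (use g_id in simp_all)
  moreover have "Atom p \<in># D" using mem_of_eq[OF g_id.prems] by simp
  ultimately show ?case using g_id by - (rule g_id'[of p], simp_all)
next
  case (g_bot G D')
  have "ms2 (add_mset (Conj P Q) D)" using g_bot by simp
  then show ?case using g_bot by - (rule g_bot', simp_all)
next
  case (g_Lconj X Y G D') show ?case using gwf.g_Lconj[OF g_Lconj.IH[OF g_Lconj.prems]] .
next
  case (g_Ldisj X G D' Y) show ?case using gwf.g_Ldisj[OF g_Ldisj.IH(1)[OF g_Ldisj.prems] g_Ldisj.IH(2)[OF g_Ldisj.prems]] .
next
  case (g_Lmimp A B G D')
  have "gwf G (add_mset Q (add_mset A D))"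
    by (rule g_Lmimp.IH(1)) (use g_Lmimp.prems in \<open>simp add: add_mset_commute\<close>)
  then have "gwf G (add_mset A (add_mset Q D))" by (simp add: add_mset_commute)
  then show ?case using g_Lmimp.hyps g_Lmimp.IH(2)[OF g_Lmimp.prems] by - (rule gwf.g_Lmimp)
next
  case (g_Rconj G X D' Y)
  from g_Rconj.prems show ?case
  proof (cases rule: add_mset_split)
    case 1 then show ?thesis using g_Rconj by simp
  next
    case (2 K)
    have "gwf G (add_mset Q (add_mset X K))"
      by (rule g_Rconj.IH(1)) (use 2 in \<open>simp add: add_mset_commute\<close>)
    moreover have "gwf G (add_mset Q (add_mset Y K))"
      by (rule g_Rconj.IH(2)) (use 2 in \<open>simp add: add_mset_commute\<close>)
    ultimately have "gwf G (add_mset (Conj X Y) (add_mset Q K))"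
      by (intro gwf.g_Rconj) (simp_all add: add_mset_commute)
    then show ?thesis using 2 by (simp add: add_mset_commute)
  qed
next
  case (g_Rdisj G X Y D')
  from g_Rdisj.prems show ?case
  proof (cases rule: add_mset_split)
    case 1 then show ?thesis using g_Rdisj by simp
  next
    case (2 K)
    have "gwf G (add_mset Q (add_mset X (add_mset Y K)))"
      by (rule g_Rdisj.IH) (use 2 in \<open>simp add: add_mset_commute\<close>)
    then have "gwf G (add_mset (Disj X Y) (add_mset Q K))"
      by (intro gwf.g_Rdisj) (simp_all add: add_mset_commute)
    then show ?thesis using 2 by (simp add: add_mset_commute)
  qed
next
  case (g_Rmimp A B G D')
  from g_Rmimp.prems show ?case
  proof (cases rule: add_mset_split)
    case 1 then show ?thesis by simp
  next
    case (2 K)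
    have "gwf (add_mset A G) (add_mset Q (add_mset B K))"
      by (rule g_Rmimp.IH) (use 2 in \<open>simp add: add_mset_commute\<close>)
    then have "gwf G (add_mset (MImp A B) (add_mset Q K))"
      using g_Rmimp.hyps by (intro gwf.g_Rmimp) (simp_all add: add_mset_commute)
    then show ?thesis using 2 by (simp add: add_mset_commute)
  qed
next
  case (g_LRimp A B C E G D')
  have "ms2 (add_mset (Conj P Q) D)" by (rule ms2_of_eq[OF g_LRimp.prems]) (use g_LRimp in simp_all)
  moreover have "Imp A B \<in># D" using mem_of_eq[OF g_LRimp.prems] by simp
  ultimately show ?case using g_LRimp by - (rule g_LRimp'[of C E _ A B], simp_all)
next
  case (g_Rimp A B G D')
  have "ms2 (add_mset (Conj P Q) D)" by (rule ms2_of_eq[OF g_Rimp.prems]) (use g_Rimp in simp_all)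
  moreover have "Imp A B \<in># D" using mem_of_eq[OF g_Rimp.prems] by simp
  ultimately show ?case using g_Rimp by - (rule g_Rimp'[of A B], simp_all)
qed

lemma gwf_invRdisj: "gwf G1 D1 \<Longrightarrow> D1 = add_mset (Disj P Q) D \<Longrightarrow> gwf G1 (add_mset P (add_mset Q D))"
proof (induction arbitrary: D rule: gwf.induct)
  case (g_id G D' p)
  have "ms2 (add_mset (Disj P Q) D)" by (rule ms2_of_eq[OF g_id.prems]) (use g_id in simp_all)
  moreover have "Atom p \<in># D" using mem_of_eq[OF g_id.prems] by simp
  ultimately show ?case using g_id by - (rule g_id'[of p], simp_all)
next
  case (g_bot G D')
  have "ms2 (add_mset (Disj P Q) D)" using g_bot by simp
  then show ?case using g_bot by - (rule g_bot', simp_all)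
next
  case (g_Lconj X Y G D') show ?case using gwf.g_Lconj[OF g_Lconj.IH[OF g_Lconj.prems]] .
next
  case (g_Ldisj X G D' Y) show ?case using gwf.g_Ldisj[OF g_Ldisj.IH(1)[OF g_Ldisj.prems] g_Ldisj.IH(2)[OF g_Ldisj.prems]] .
next
  case (g_Lmimp A B G D')
  have "gwf G (add_mset P (add_mset Q (add_mset A D)))"
    by (rule g_Lmimp.IH(1)) (use g_Lmimp.prems in \<open>simp add: add_mset_commute\<close>)
  then have "gwf G (add_mset A (add_mset P (add_mset Q D)))" by (simp add: add_mset_commute)
  then show ?case using g_Lmimp.hyps g_Lmimp.IH(2)[OF g_Lmimp.prems] by - (rule gwf.g_Lmimp)
next
  case (g_Rconj G X D' Y)
  from g_Rconj.prems show ?case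
  proof (cases rule: add_mset_split)
    case 1 then show ?thesis using g_Rconj by simp
  next
    case (2 K)
    have "gwf G (add_mset P (add_mset Q (add_mset X K)))"
      by (rule g_Rconj.IH(1)) (use 2 in \<open>simp add: add_mset_commute\<close>)
    moreover have "gwf G (add_mset P (add_mset Q (add_mset Y K)))"
      by (rule g_Rconj.IH(2)) (use 2 in \<open>simp add: add_mset_commute\<close>)
    ultimately have "gwf G (add_mset (Conj X Y) (add_mset P (add_mset Q K)))"
      by (intro gwf.g_Rconj) (simp_all add: add_mset_commute)
    then show ?thesis using 2 by (simp add: add_mset_commute)
  qed
next
  case (g_Rdisj G X Y D')
  from g_Rdisj.prems show ?case
  proof (cases rule: add_mset_split)
    case 1 then show ?thesis using g_Rdisj by simp
  next
    case (2 K)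
    have "gwf G (add_mset P (add_mset Q (add_mset X (add_mset Y K))))"
      by (rule g_Rdisj.IH) (use 2 in \<open>simp add: add_mset_commute\<close>)
    then have "gwf G (add_mset (Disj X Y) (add_mset P (add_mset Q K)))"
      by (intro gwf.g_Rdisj) (simp_all add: add_mset_commute)
    then show ?thesis using 2 by (simp add: add_mset_commute)
  qed
next
  case (g_Rmimp A B G D')
  from g_Rmimp.prems show ?case
  proof (cases rule: add_mset_split)
    case 1 then show ?thesis by simp
  next
    case (2 K)
    have "gwf (add_mset A G) (add_mset P (add_mset Q (add_mset B K)))"
      by (rule g_Rmimp.IH) (use 2 in \<open>simp add: add_mset_commute\<close>)
    then have "gwf G (add_mset (MImp A B) (add_mset P (add_mset Q K)))"
      using g_Rmimp.hyps by (intro gwf.g_Rmimp) (simp_all add: add_mset_commute)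
    then show ?thesis using 2 by (simp add: add_mset_commute)
  qed
next
  case (g_LRimp A B C E G D')
  have "ms2 (add_mset (Disj P Q) D)" by (rule ms2_of_eq[OF g_LRimp.prems]) (use g_LRimp in simp_all)
  moreover have "Imp A B \<in># D" using mem_of_eq[OF g_LRimp.prems] by simp
  ultimately show ?case using g_LRimp by - (rule g_LRimp'[of C E _ A B], simp_all)
next
  case (g_Rimp A B G D')
  have "ms2 (add_mset (Disj P Q) D)" by (rule ms2_of_eq[OF g_Rimp.prems]) (use g_Rimp in simp_all)
  moreover have "Imp A B \<in># D" using mem_of_eq[OF g_Rimp.prems] by simp
  ultimately show ?case using g_Rimp by - (rule g_Rimp'[of A B], simp_all)
qed




lemma gwf_invLmimp1: "gwf G1 D1 \<Longrightarrow> G1 = add_mset (MImp P Q) G \<Longrightarrow> gwf G (add_mset P D1)"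
proof (induction arbitrary: G rule: gwf.induct)
  case (g_id G' D' p)
  have m: "ms2 (add_mset (MImp P Q) G)" by (rule ms2_of_eq[OF g_id.prems]) (use g_id in simp_all)
  moreover have "Atom p \<in># G" using mem_of_eq[OF g_id.prems] by simp
  ultimately show ?case using g_id by - (rule g_id'[of p], simp_all add: frm_frm2)
next
  case (g_bot G' D')
  have m: "ms2 (add_mset (MImp P Q) G)" by (rule ms2_of_eq[OF g_bot.prems]) (use g_bot in simp_all)
  moreover have "Bot \<in># G" using mem_of_eq[OF g_bot.prems] by simp
  ultimately show ?case using g_bot by - (rule g_bot', simp_all add: frm_frm2)
next
  case (g_Lconj X Y G' D')
  from g_Lconj.prems show ?case
  proof (cases rule: add_mset_split)
    case 1 then show ?thesis by simp
  next
    case (2 K)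
    have "gwf (add_mset X (add_mset Y K)) (add_mset P D')"
      by (rule g_Lconj.IH) (use 2 in \<open>simp add: add_mset_commute\<close>)
    then show ?thesis using 2 by (simp add: gwf.g_Lconj)
  qed
next
  case (g_Ldisj X G' D' Y)
  from g_Ldisj.prems show ?case
  proof (cases rule: add_mset_split)
    case 1 then show ?thesis by simp
  next
    case (2 K)
    have "gwf (add_mset X K) (add_mset P D')"
      by (rule g_Ldisj.IH(1)) (use 2 in \<open>simp add: add_mset_commute\<close>)
    moreover have "gwf (add_mset Y K) (add_mset P D')"
      by (rule g_Ldisj.IH(2)) (use 2 in \<open>simp add: add_mset_commute\<close>)
    ultimately show ?thesis using 2 by (simp add: gwf.g_Ldisj)
  qed
next
  case (g_Lmimp A B G' D')
  from g_Lmimp.prems show ?case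
  proof (cases rule: add_mset_split)
    case 1 then show ?thesis using g_Lmimp.hyps by simp
  next
    case (2 K)
    have "gwf K (add_mset P (add_mset A D'))"
      by (rule g_Lmimp.IH(1)) (use 2 in \<open>simp add: add_mset_commute\<close>)
    then have a: "gwf K (add_mset A (add_mset P D'))" by (simp add: add_mset_commute)
    have b: "gwf (add_mset B K) (add_mset P D')"
      by (rule g_Lmimp.IH(2)) (use 2 in \<open>simp add: add_mset_commute\<close>)
    have "gwf (add_mset (MImp A B) K) (add_mset P D')"
      using g_Lmimp.hyps(1,2) a b by (rule gwf.g_Lmimp)
    then show ?thesis using 2 by simp
  qed
next
  case (g_Rconj G' X D' Y)
  have "gwf G (add_mset P (add_mset X D'))" "gwf G (add_mset P (add_mset Y D'))"
    using g_Rconj.IH g_Rconj.prems by simp_all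
  then have "gwf G (add_mset (Conj X Y) (add_mset P D'))"
    by (intro gwf.g_Rconj) (simp_all add: add_mset_commute)
  then show ?case by (simp add: add_mset_commute)
next
  case (g_Rdisj G' X Y D')
  have "gwf G (add_mset P (add_mset X (add_mset Y D')))"
    using g_Rdisj.IH g_Rdisj.prems by simp_all
  then have "gwf G (add_mset (Disj X Y) (add_mset P D'))"
    by (intro gwf.g_Rdisj) (simp_all add: add_mset_commute)
  then show ?case by (simp add: add_mset_commute)
next
  case (g_Rmimp A B G' D')
  have "gwf (add_mset A G) (add_mset P (add_mset B D'))"
    by (rule g_Rmimp.IH) (use g_Rmimp.prems in \<open>simp add: add_mset_commute\<close>)
  then have "gwf G (add_mset (MImp A B) (add_mset P D'))"
    using g_Rmimp.hyps by (intro gwf.g_Rmimp) (simp_all add: add_mset_commute)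
  then show ?case by (simp add: add_mset_commute)
next
  case (g_LRimp A B C E G' D')
  have m: "ms2 (add_mset (MImp P Q) G)" by (rule ms2_of_eq[OF g_LRimp.prems]) (use g_LRimp in simp_all)
  moreover have "Imp C E \<in># G" using mem_of_eq[OF g_LRimp.prems] by simp
  ultimately show ?case using g_LRimp by - (rule g_LRimp'[of C E _ A B], simp_all add: frm_frm2)
next
  case (g_Rimp A B G' D')
  have m: "ms2 (add_mset (MImp P Q) G)" using g_Rimp.hyps g_Rimp.prems by simp
  then show ?case using g_Rimp by - (rule g_Rimp'[of A B], simp_all add: frm_frm2)
qed

lemma add2_split:
  assumes "add_mset R M = add_mset F (add_mset F D)"
  obtains "R = F" "M = add_mset F D" | K where "M = add_mset F (add_mset F K)" "D = add_mset R K"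
proof -
  from assms show ?thesis
  proof (cases rule: add_mset_split)
    case 1 then show ?thesis using that by simp
  next
    case (2 K)
    from 2(2) show ?thesis
    proof (cases rule: add_mset_split)
      case 1 then show ?thesis using that 2 by simp
    next
      case (2 K') then show ?thesis using that \<open>M = add_mset F K\<close> by simp
    qed
  qed
qed

definition contrR :: "fm \<Rightarrow> bool" where
  "contrR F \<longleftrightarrow> (\<forall>G D. gwf G (add_mset F (add_mset F D)) \<longrightarrow> gwf G (add_mset F D))"

lemma contr_inner:
  assumes IHF: "\<And>F'. msz F' < msz F \<Longrightarrow> is_frm F' \<Longrightarrow> contrR F'" and fF: "is_frm F"
  shows "gwf G D1 \<Longrightarrow> D1 = add_mset F (add_mset F D) \<Longrightarrow> gwf G (add_mset F D)"
proof (induction arbitrary: D rule: gwf.induct)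
  case (g_id G' D' p)
  from g_id.prems show ?case
  proof (cases rule: add2_split)
    case 1 then show ?thesis using g_id.hyps 1(1)[symmetric] 1(2) gwf.g_id[of G' D p] by simp
  next
    case (2 K) then show ?thesis using g_id.hyps by - (rule g_id'[of p], simp_all)
  qed
next
  case (g_bot G' D')
  then show ?case by - (rule g_bot', simp_all)
next
  case (g_Lconj X Y G' D') then show ?case by (simp add: gwf.g_Lconj)
next
  case (g_Ldisj X G' D' Y) then show ?case by (simp add: gwf.g_Ldisj)
next
  case (g_Lmimp A B G' D')
  have "gwf G' (add_mset F (add_mset A D))"
    by (rule g_Lmimp.IH(1)) (use g_Lmimp.prems in \<open>simp add: add_mset_commute\<close>)
  then have a: "gwf G' (add_mset A (add_mset F D))" by (simp add: add_mset_commute)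
  have b: "gwf (add_mset B G') (add_mset F D)" using g_Lmimp.IH(2) g_Lmimp.prems by simp
  show ?case using g_Lmimp.hyps(1,2) a b by (rule gwf.g_Lmimp)
next
  case (g_Rconj G' X D' Y)
  from g_Rconj.prems show ?case
  proof (cases rule: add2_split)
    case 1
    have fXY: "is_frm X" "is_frm Y" using fF 1 by auto
    have cX: "contrR X" by (rule IHF) (use 1 fXY in auto)
    have cY: "contrR Y" by (rule IHF) (use 1 fXY in auto)
    have "gwf G' (add_mset X (add_mset (Conj X Y) D))" using g_Rconj.hyps(1) 1 by simp
    then have "gwf G' (add_mset X (add_mset X D))"
      by (rule gwf_invRconj1) (rule add_mset_commute)
    then have x: "gwf G' (add_mset X D)" using cX unfolding contrR_def by blast
    have "gwf G' (add_mset Y (add_mset (Conj X Y) D))" using g_Rconj.hyps(2) 1 by simp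
    then have "gwf G' (add_mset Y (add_mset Y D))"
      by (rule gwf_invRconj2) (rule add_mset_commute)
    then have y: "gwf G' (add_mset Y D)" using cY unfolding contrR_def by blast
    show ?thesis using gwf.g_Rconj[OF x y] 1 by simp
  next
    case (2 K)
    have "gwf G' (add_mset F (add_mset X K))"
      by (rule g_Rconj.IH(1)) (use 2 in \<open>simp add: add_mset_commute\<close>)
    moreover have "gwf G' (add_mset F (add_mset Y K))"
      by (rule g_Rconj.IH(2)) (use 2 in \<open>simp add: add_mset_commute\<close>)
    ultimately have "gwf G' (add_mset (Conj X Y) (add_mset F K))"
      by (intro gwf.g_Rconj) (simp_all add: add_mset_commute)
    then show ?thesis using 2 by (simp add: add_mset_commute)
  qed
next
  case (g_Rdisj G' X Y D')
  from g_Rdisj.prems show ?case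
  proof (cases rule: add2_split)
    case 1
    have fXY: "is_frm X" "is_frm Y" using fF 1 by auto
    have cX: "contrR X" by (rule IHF) (use 1 fXY in auto)
    have cY: "contrR Y" by (rule IHF) (use 1 fXY in auto)
    have "gwf G' (add_mset X (add_mset Y (add_mset (Disj X Y) D)))" using g_Rdisj.hyps(1) 1 by simp
    then have "gwf G' (add_mset X (add_mset Y (add_mset X (add_mset Y D))))"
      by (rule gwf_invRdisj) (simp only: add_mset_commute)
    then have "gwf G' (add_mset X (add_mset X (add_mset Y (add_mset Y D))))" by (simp add: add_mset_commute)
    then have "gwf G' (add_mset X (add_mset Y (add_mset Y D)))" using cX unfolding contrR_def by blast
    then have "gwf G' (add_mset Y (add_mset Y (add_mset X D)))" by (simp add: add_mset_commute)
    then have "gwf G' (add_mset Y (add_mset X D))" using cY unfolding contrR_def by blast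
    then have "gwf G' (add_mset X (add_mset Y D))" by (simp add: add_mset_commute)
    then have "gwf G' (add_mset (Disj X Y) D)" by (rule gwf.g_Rdisj)
    then show ?thesis using 1 by simp
  next
    case (2 K)
    have "gwf G' (add_mset F (add_mset X (add_mset Y K)))"
      by (rule g_Rdisj.IH) (use 2 in \<open>simp add: add_mset_commute\<close>)
    then have "gwf G' (add_mset (Disj X Y) (add_mset F K))"
      by (intro gwf.g_Rdisj) (simp_all add: add_mset_commute)
    then show ?thesis using 2 by (simp add: add_mset_commute)
  qed
next
  case (g_Rmimp A B G' D')
  from g_Rmimp.prems show ?case
  proof (cases rule: add2_split)
    case 1 then show ?thesis using fF by auto
  next
    case (2 K)
    have "gwf (add_mset A G') (add_mset F (add_mset B K))"
      by (rule g_Rmimp.IH) (use 2 in \<open>simp add: add_mset_commute\<close>)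
    then have "gwf G' (add_mset (MImp A B) (add_mset F K))"
      using g_Rmimp.hyps by (intro gwf.g_Rmimp) (simp_all add: add_mset_commute)
    then show ?thesis using 2 by (simp add: add_mset_commute)
  qed
next
  case (g_LRimp A B C E G' D')
  have "ms2 (add_mset (Imp A B) D')" using g_LRimp.hyps by simp
  then have "ms2 (add_mset F (add_mset F D))" using g_LRimp.prems by simp
  then have "ms2 (add_mset F D)" by simp
  moreover have "Imp A B \<in># add_mset F D"
    using mem_of_eq[of "Imp A B" D' F "add_mset F D"] g_LRimp.prems by (cases "Imp A B = F") simp_all
  ultimately show ?case using g_LRimp by - (rule g_LRimp'[of C E _ A B], simp_all)
next
  case (g_Rimp A B G' D')
  have "ms2 (add_mset (Imp A B) D')" using g_Rimp.hyps by simp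
  then have "ms2 (add_mset F (add_mset F D))" using g_Rimp.prems by simp
  then have "ms2 (add_mset F D)" by simp
  moreover have "Imp A B \<in># add_mset F D"
    using mem_of_eq[of "Imp A B" D' F "add_mset F D"] g_Rimp.prems by (cases "Imp A B = F") simp_all
  ultimately show ?case using g_Rimp by - (rule g_Rimp'[of A B], simp_all)
qed

lemma contrR_all: "is_frm F \<Longrightarrow> contrR F"
proof (induction "msz F" arbitrary: F rule: less_induct)
  case less
  show ?case unfolding contrR_def using contr_inner[OF less] by blast
qed

lemma gwf_contr: "gwf G (add_mset F (add_mset F D)) \<Longrightarrow> is_frm F \<Longrightarrow> gwf G (add_mset F D)"
  using contrR_all unfolding contrR_def by blast

lemma gwfs_gwf: "gwfs G Z \<Longrightarrow> gwf G {#Z#}"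
proof (induction rule: gwfs.induct)
  case (s_id G p) then show ?case by (intro gwf.g_id) simp_all
next
  case (s_bot G Z) then show ?case by (intro gwf.g_bot) simp_all
next
  case (s_Lconj X Y G Z) show ?case by (rule gwf.g_Lconj[OF s_Lconj.IH])
next
  case (s_Rconj G X Y) then show ?case using gwf.g_Rconj[of G X "{#}" Y] by simp
next
  case (s_Ldisj X G Z Y) show ?case by (rule gwf.g_Ldisj[OF s_Ldisj.IH])
next
  case (s_Rdisjl G X Y)
  have "gwf G {#X, Y#}" using gwf_weakR[OF s_Rdisjl.IH s_Rdisjl.hyps(2)] by (simp add: add_mset_commute)
  then show ?case using gwf.g_Rdisj[of G X Y "{#}"] by simp
next
  case (s_Rdisjr G Y X)
  have "gwf G {#X, Y#}" using gwf_weakR[OF s_Rdisjr.IH s_Rdisjr.hyps(2)] by simp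
  then show ?case using gwf.g_Rdisj[of G X Y "{#}"] by simp
next
  case (s_Lmimp A B G Z)
  have "gwf G {#A, A#}" using gwf_invLmimp1[OF s_Lmimp.IH(1), of A B G] by simp
  then have "gwf G {#A#}" using gwf_contr[of G A "{#}"] s_Lmimp.hyps by simp
  then have "gwf G (add_mset A {#Z#})" using gwf_weakR[of G "{#A#}" Z] gwfs_wf[OF s_Lmimp.hyps(4)]
    by (simp add: add_mset_commute)
  then show ?case by (rule gwf.g_Lmimp[OF s_Lmimp.hyps(1,2) _ s_Lmimp.IH(2)])
next
  case (s_Rmimp A B G) then show ?case using gwf.g_Rmimp[of A B G "{#}"] by simp
next
  case (s_LRimp A B C E G) then show ?case using gwf.g_LRimp[of A B C E G "{#}"] by simp
next
  case (s_Rimp A B G) then show ?case using gwf.g_Rimp[of A B G "{#}"] by simp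
qed




definition filt :: "fm set \<Rightarrow> bool" where
  "filt T \<longleftrightarrow> (\<forall>X\<in>T. is_frm X) \<and> Top \<in> T \<and> (\<forall>X Y. X \<in> T \<longrightarrow> hthm (Imp X Y) \<longrightarrow> Y \<in> T)
     \<and> (\<forall>X Y. X \<in> T \<longrightarrow> Y \<in> T \<longrightarrow> Conj X Y \<in> T)"

definition pfilt :: "fm set \<Rightarrow> bool" where
  "pfilt T \<longleftrightarrow> filt T \<and> Bot \<notin> T \<and> (\<forall>X Y. Disj X Y \<in> T \<longrightarrow> X \<in> T \<or> Y \<in> T)"

lemma frm_Top[simp]: "is_frm Top" by (simp add: Top_def)

lemma h_top: "hthm Top" unfolding Top_def by (rule ax_id) simp

lemma filt_up: "filt T \<Longrightarrow> X \<in> T \<Longrightarrow> hthm (Imp X Y) \<Longrightarrow> Y \<in> T"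
  unfolding filt_def by blast
lemma filt_conj: "filt T \<Longrightarrow> X \<in> T \<Longrightarrow> Y \<in> T \<Longrightarrow> Conj X Y \<in> T"
  unfolding filt_def by blast
lemma filt_frm: "filt T \<Longrightarrow> X \<in> T \<Longrightarrow> is_frm X"
  unfolding filt_def by blast
lemma filt_top: "filt T \<Longrightarrow> Top \<in> T"
  unfolding filt_def by blast

lemma filt_thm: "filt T \<Longrightarrow> hthm Y \<Longrightarrow> Y \<in> T"
  by (meson filt_top filt_up frm_Top r_wk)

lemma filt_conjD: "filt T \<Longrightarrow> Conj X Y \<in> T \<Longrightarrow> X \<in> T \<and> Y \<in> T"
proof -
  assume f: "filt T" and c: "Conj X Y \<in> T"
  have "is_frm (Conj X Y)" using filt_frm[OF f c] .
  then have "hthm (Imp (Conj X Y) X)" "hthm (Imp (Conj X Y) Y)" by (auto intro: ax_and1 ax_and2)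
  then show ?thesis using filt_up[OF f c] by blast
qed

fun tr :: "fm set \<Rightarrow> fm \<Rightarrow> bool" where
  "tr T (Atom p) = (Atom p \<in> T)"
| "tr T Bot = False"
| "tr T (Conj X Y) = (tr T X \<and> tr T Y)"
| "tr T (Disj X Y) = (tr T X \<or> tr T Y)"
| "tr T (Imp A B) = (Imp A B \<in> T)"
| "tr T (MImp A B) = (\<not> tr T A \<or> tr T B)"

lemma tr_mem: "pfilt T \<Longrightarrow> is_frm X \<Longrightarrow> tr T X \<longleftrightarrow> X \<in> T"
proof (induction X)
  case (Conj X Y)
  then have f: "filt T" by (simp add: pfilt_def)
  have fx: "is_frm X" "is_frm Y" using Conj.prems by simp_all
  have e: "X \<in> T \<and> Y \<in> T \<longleftrightarrow> Conj X Y \<in> T" using filt_conjD[OF f] filt_conj[OF f] by blast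
  have "tr T (Conj X Y) \<longleftrightarrow> X \<in> T \<and> Y \<in> T" using Conj.IH[OF Conj.prems(1)] fx by simp
  then show ?case using e by simp
next
  case (Disj X Y)
  then have f: "filt T" and pr: "\<forall>X Y. Disj X Y \<in> T \<longrightarrow> X \<in> T \<or> Y \<in> T" by (simp_all add: pfilt_def)
  have fx: "is_frm X" "is_frm Y" using Disj.prems by simp_all
  have "X \<in> T \<Longrightarrow> Disj X Y \<in> T" using fx by (intro filt_up[OF f _ ax_or1])
  moreover have "Y \<in> T \<Longrightarrow> Disj X Y \<in> T" using fx by (intro filt_up[OF f _ ax_or2])
  ultimately have e: "X \<in> T \<or> Y \<in> T \<longleftrightarrow> Disj X Y \<in> T" using pr by blast
  have "tr T (Disj X Y) \<longleftrightarrow> X \<in> T \<or> Y \<in> T" using Disj.IH[OF Disj.prems(1)] fx by simp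
  then show ?case using e by simp
next
  case Bot then show ?case by (simp add: pfilt_def)
qed simp_all

lemma h_conj_mono1:
  assumes "is_frm m" "is_frm n" "is_frm x"
  shows "hthm (Imp (Conj (Conj m n) x) (Conj m x))"
proof (rule r_conjI)
  show "hthm (Imp (Conj (Conj m n) x) m)"
    by (rule r_trans[OF ax_and1 ax_and1]) (use assms in simp_all)
  show "hthm (Imp (Conj (Conj m n) x) x)" by (rule ax_and2) (use assms in simp_all)
qed

lemma h_conj_mono2:
  assumes "is_frm m" "is_frm n" "is_frm x"
  shows "hthm (Imp (Conj (Conj m n) x) (Conj n x))"
proof (rule r_conjI)
  show "hthm (Imp (Conj (Conj m n) x) n)"
    by (rule r_trans[OF ax_and1 ax_and2]) (use assms in simp_all)
  show "hthm (Imp (Conj (Conj m n) x) x)" by (rule ax_and2) (use assms in simp_all)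
qed

definition genf :: "fm set \<Rightarrow> fm \<Rightarrow> fm set" where
  "genf M x = {Z. \<exists>m\<in>M. hthm (Imp (Conj m x) Z)}"

lemma genf_filt:
  assumes f: "filt M" and x: "is_frm x"
  shows "filt (genf M x)" "M \<subseteq> genf M x" "x \<in> genf M x"
proof -
  show "filt (genf M x)" unfolding filt_def
  proof (intro conjI allI impI ballI)
    fix Z assume "Z \<in> genf M x" then show "is_frm Z" unfolding genf_def using hthm_frm by fastforce
  next
    show "Top \<in> genf M x" unfolding genf_def
      using filt_top[OF f] filt_frm[OF f] x by (auto intro!: bexI[of _ Top] r_wk h_top)
  next
    fix X Y assume "X \<in> genf M x" "hthm (Imp X Y)"
    then show "Y \<in> genf M x" unfolding genf_def by (blast intro: r_trans)
  next
    fix X Y assume "X \<in> genf M x" "Y \<in> genf M x"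
    then obtain m n where mn: "m \<in> M" "n \<in> M" "hthm (Imp (Conj m x) X)" "hthm (Imp (Conj n x) Y)"
      unfolding genf_def by blast
    have fm: "is_frm m" "is_frm n" using mn filt_frm[OF f] by auto
    have "Conj m n \<in> M" using filt_conj[OF f mn(1,2)] .
    moreover have "hthm (Imp (Conj (Conj m n) x) (Conj X Y))"
      using r_trans[OF h_conj_mono1[OF fm x] mn(3)] r_trans[OF h_conj_mono2[OF fm x] mn(4)]
      by (rule r_conjI)
    ultimately show "Conj X Y \<in> genf M x" unfolding genf_def by blast
  qed
  show "M \<subseteq> genf M x" unfolding genf_def
    using filt_frm[OF f] x by (auto intro: ax_and1)
  show "x \<in> genf M x" unfolding genf_def
    using filt_top[OF f] x by (auto intro!: bexI[of _ Top] ax_and2)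
qed

lemma separation:
  assumes P: "is_frm P" and Q: "is_frm Q" and nh: "\<not> hthm (Imp P Q)"
  shows "\<exists>T. pfilt T \<and> P \<in> T \<and> Q \<notin> T"
proof -
  define A where "A = {F. filt F \<and> P \<in> F \<and> Q \<notin> F}"
  define F0 where "F0 = {Y. hthm (Imp P Y)}"
  have fF0: "filt F0" unfolding filt_def
  proof (intro conjI allI impI ballI)
    fix X assume "X \<in> F0" then show "is_frm X" unfolding F0_def using hthm_frm by fastforce
  next
    show "Top \<in> F0" unfolding F0_def using P by (simp add: r_wk h_top)
  next
    fix X Y assume "X \<in> F0" "hthm (Imp X Y)"
    then show "Y \<in> F0" unfolding F0_def by (auto intro: r_trans)
  next
    fix X Y assume "X \<in> F0" "Y \<in> F0"
    then show "Conj X Y \<in> F0" unfolding F0_def by (auto intro: r_conjI)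
  qed
  have F0: "F0 \<in> A" unfolding A_def using fF0 P nh by (simp add: F0_def ax_id)
  have "\<forall>C\<in>chains A. \<exists>U\<in>A. \<forall>X\<in>C. X \<subseteq> U"
  proof
    fix C assume C: "C \<in> chains A"
    show "\<exists>U\<in>A. \<forall>X\<in>C. X \<subseteq> U"
    proof (cases "C = {}")
      case True then show ?thesis using F0 by blast
    next
      case False
      have CA: "C \<subseteq> A" using chainsD2[OF C] .
      have "filt (\<Union>C) \<and> P \<in> \<Union>C \<and> Q \<notin> \<Union>C" unfolding filt_def
      proof (intro conjI allI impI ballI)
        fix X assume "X \<in> \<Union>C" then show "is_frm X" using CA filt_frm unfolding A_def by blast
      next
        obtain F where "F \<in> C" using False by blast
        then show "Top \<in> \<Union>C" using CA filt_top unfolding A_def by blast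
      next
        fix X Y assume "X \<in> \<Union>C" "hthm (Imp X Y)"
        then show "Y \<in> \<Union>C" using CA filt_up unfolding A_def by blast
      next
        fix X Y assume "X \<in> \<Union>C" "Y \<in> \<Union>C"
        then obtain F1 F2 where F: "F1 \<in> C" "F2 \<in> C" "X \<in> F1" "Y \<in> F2" by blast
        from chainsD[OF C F(1,2)] show "Conj X Y \<in> \<Union>C"
        proof
          assume "F1 \<subseteq> F2" then show ?thesis using F CA filt_conj unfolding A_def by blast
        next
          assume "F2 \<subseteq> F1" then show ?thesis using F CA filt_conj unfolding A_def by blast
        qed
      next
        obtain F where "F \<in> C" using False by blast
        then show "P \<in> \<Union>C" using CA unfolding A_def by blast
        show "Q \<notin> \<Union>C" using CA unfolding A_def by blast
      qed
      then have "\<Union>C \<in> A" unfolding A_def by blast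
      then show ?thesis by blast
    qed
  qed
  then obtain M where M: "M \<in> A" and mx: "\<forall>X\<in>A. M \<subseteq> X \<longrightarrow> X = M"
    using Zorn_Lemma2[of A] by blast
  have fM: "filt M" and PM: "P \<in> M" and QM: "Q \<notin> M" using M unfolding A_def by auto
  have key: "\<And>x. is_frm x \<Longrightarrow> x \<notin> M \<Longrightarrow> \<exists>m\<in>M. hthm (Imp (Conj m x) Q)"
  proof -
    fix x assume x: "is_frm x" and xM: "x \<notin> M"
    show "\<exists>m\<in>M. hthm (Imp (Conj m x) Q)"
    proof (rule ccontr)
      assume "\<not> ?thesis"
      then have "Q \<notin> genf M x" unfolding genf_def by blast
      then have "genf M x \<in> A" unfolding A_def using genf_filt[OF fM x] PM by blast
      then have "genf M x = M" using mx genf_filt(2)[OF fM x] by blast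
      then show False using genf_filt(3)[OF fM x] xM by blast
    qed
  qed
  have "pfilt M" unfolding pfilt_def
  proof (intro conjI allI impI fM)
    show "Bot \<notin> M"
    proof
      assume "Bot \<in> M" then have "Q \<in> M" using filt_up[OF fM _ ax_bot[OF Q]] by blast
      then show False using QM by blast
    qed
  next
    fix x y assume d: "Disj x y \<in> M"
    have fxy: "is_frm x" "is_frm y" using filt_frm[OF fM d] by auto
    show "x \<in> M \<or> y \<in> M"
    proof (rule ccontr)
      assume "\<not> (x \<in> M \<or> y \<in> M)"
      then obtain m n where mn: "m \<in> M" "n \<in> M" "hthm (Imp (Conj m x) Q)" "hthm (Imp (Conj n y) Q)"
        using key fxy by blast
      have fm: "is_frm m" "is_frm n" using mn filt_frm[OF fM] by auto
      define k where "k = Conj m n"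
      have kM: "Conj k (Disj x y) \<in> M" unfolding k_def using filt_conj[OF fM filt_conj[OF fM mn(1,2)] d] .
      have "hthm (Imp (Conj k (Disj x y)) (Disj (Conj k x) (Conj k y)))"
        unfolding k_def using fm fxy by (intro ax_dist) simp_all
      moreover have "hthm (Imp (Disj (Conj k x) (Conj k y)) Q)" unfolding k_def
        using r_trans[OF h_conj_mono1[OF fm fxy(1)] mn(3)] r_trans[OF h_conj_mono2[OF fm fxy(2)] mn(4)]
        by (rule r_disjE)
      ultimately have "hthm (Imp (Conj k (Disj x y)) Q)" by (rule r_trans)
      then have "Q \<in> M" using filt_up[OF fM kM] by blast
      then show False using QM by blast
    qed
  qed
  then show ?thesis using PM QM by blast
qed

lemma sep_thm:
  assumes "is_frm P" "is_frm Q" "\<And>T. pfilt T \<Longrightarrow> P \<in> T \<Longrightarrow> Q \<in> T"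
  shows "hthm (Imp P Q)"
  using separation[OF assms(1,2)] assms(3) by blast

definition valid :: "fm multiset \<Rightarrow> fm multiset \<Rightarrow> bool" where
  "valid G D \<longleftrightarrow> (\<forall>T. pfilt T \<longrightarrow> (\<forall>X\<in>#G. tr T X) \<longrightarrow> (\<exists>Y\<in>#D. tr T Y))"

lemma gwf_sound: "gwf G D \<Longrightarrow> valid G D"
proof (induction rule: gwf.induct)
  case (g_LRimp A B C E G D)
  have fr: "is_frm A" "is_frm B" "is_frm C" "is_frm E" by fact+
  have v: "\<And>T. pfilt T \<Longrightarrow> (C \<notin> T \<or> E \<in> T) \<Longrightarrow> A \<in> T \<Longrightarrow> B \<in> T"
    using g_LRimp.IH fr unfolding valid_def by (auto simp: tr_mem)
  have h1: "hthm (Imp A (Disj C B))"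
  proof (rule sep_thm)
    fix T assume T: "pfilt T" "A \<in> T"
    then have "C \<in> T \<or> B \<in> T" using v by blast
    then show "Disj C B \<in> T"
      using tr_mem[OF T(1), of "Disj C B"] tr_mem[OF T(1), of C] tr_mem[OF T(1), of B] fr by auto
  qed (use fr in simp_all)
  have h2: "hthm (Imp (Conj A E) B)"
  proof (rule sep_thm)
    fix T assume T: "pfilt T" "Conj A E \<in> T"
    then have "A \<in> T" "E \<in> T" using filt_conjD pfilt_def by blast+
    then show "B \<in> T" using v T by blast
  qed (use fr in simp_all)
  have h: "hthm (Imp (Imp C E) (Imp A B))" using h1 h2 by (rule r_N2)
  show ?case unfolding valid_def
  proof (intro allI impI)
    fix T assume T: "pfilt T" "\<forall>X\<in>#add_mset (Imp C E) G. tr T X"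
    then have "Imp C E \<in> T" by simp
    then have "Imp A B \<in> T" using filt_up[OF _ _ h] T(1) pfilt_def by blast
    then show "\<exists>Y\<in>#add_mset (Imp A B) D. tr T Y" by simp
  qed
next
  case (g_Rimp A B G D)
  have h: "hthm (Imp A B)"
  proof (rule sep_thm)
    fix T assume T: "pfilt T" "A \<in> T"
    then show "B \<in> T" using g_Rimp.IH g_Rimp.hyps tr_mem[OF T(1)] unfolding valid_def by auto
  qed (use g_Rimp.hyps in simp_all)
  show ?case unfolding valid_def using filt_thm[OF _ h] pfilt_def by auto
qed (auto simp: valid_def)

lemma bigconj_mem: "filt T \<Longrightarrow> bigconj Gs \<in> T \<Longrightarrow> \<forall>C\<in>set Gs. C \<in> T"
  by (induction Gs rule: bigconj.induct) (auto dest: filt_conjD)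

lemma gwf_to_hthm:
  assumes fG: "\<forall>C\<in>set Gs. is_frm C" and fA: "is_frm A" and g: "gwf (mset Gs) {#A#}"
  shows "hthm (Imp (bigconj Gs) A)"
proof (rule sep_thm)
  fix T assume T: "pfilt T" "bigconj Gs \<in> T"
  then have "\<forall>C\<in>set Gs. C \<in> T" using bigconj_mem pfilt_def by blast
  then have "\<forall>X\<in>#mset Gs. tr T X" using tr_mem[OF T(1)] fG by auto
  then have "tr T A" using gwf_sound[OF g] T(1) unfolding valid_def by auto
  then show "A \<in> T" using tr_mem[OF T(1) fA] by simp
qed (use fG fA bigconj_frm in auto)

theorem corollary5p7:
  fixes Gs :: "fm list" and A :: fm
  assumes "distinct Gs" and "\<forall>C\<in>set Gs. is_frm C" and "is_frm A"
  shows "(hthm (Imp (bigconj Gs) A) \<longleftrightarrow> gwf (mset Gs) {#A#})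
       \<and> (gwf (mset Gs) {#A#} \<longleftrightarrow> gwfs (mset Gs) A)"
  using hthm_to_gwfs[OF assms(2)] gwfs_gwf gwf_to_hthm[OF assms(2,3)] by blast


end
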